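(* Every line of $\mathcal W(5,q)$ has $0$, $1$, $2$ or $q+1$ points in common with $\mathcal O$. Moreover there are exactly $q^2+1$ lines of $\mathcal W(5,q)$ contained in $\mathcal O$, namely the lines of $\mathcal S$.
   Context: Let $q$ be an even prime power and $\mathrm{PG}(5,q^2)$ have homogeneous coordinates $(X_1,\dots,X_6)$, points written as column vectors. Let $\Sigma$ be the set of points having a coordinate vector $(\alpha,\alpha^q,\delta_0,\beta,\beta^q,\delta_1)$ with $\alpha,\beta\in\mathbb F_{q^2}$, $\delta_0,\delta_1\in\mathbb F_q$ (a Baer subgeometry $\cong\mathrm{PG}(5,q)$). Let $\mathcal Q=\Sigma\cap\{X_6=0,\ X_3^2+X_1X_5+X_2X_4=0\}$. Fix $\omega\in\mathbb F_{q^2}\setminus\mathbb F_q$ with $\omega+\omega^q=1$ and let $h(X,Y)=\omega X_1Y_4^q+\omega^qX_1Y_6^q+\omega^qX_2Y_5^q+\omega X_2Y_6^q+X_3Y_6^q+\omega^qX_4Y_1^q+\omega X_5Y_2^q+\omega X_6Y_1^q+\omega^qX_6Y_2^q+X_6Y_3^q$. Restricted to $\Sigma$, $P\perp R\iff h(P,R)=0$ defines a symplectic polarity $\perp$ of $\Sigma$; $\mathcal W(5,q)$ is the associated symplectic polar space. For $a,b,c,d\in\mathbb F_{q^2}$ with $ad+bc=1$ let $M_{a,b,c,d}$ be the $6\times6$ matrix with rows $(a^2,0,0,0,c^2,\tfrac{c(a+c\omega^q)}{\omega})$, $(0,a^{2q},0,c^{2q},0,\tfrac{c^q(a^q+c^q\omega)}{\omega^q})$,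 $(ab,a^qb^q,1,c^qd^q,cd,\tfrac{d(a+c\omega^q)}{\omega}+\tfrac{d^q(a^q+c^q\omega)}{\omega^q}+\tfrac{1}{\omega^{q+1}})$, $(0,b^{2q},0,d^{2q},0,\tfrac{d^q(b^q+d^q\omega)+\omega}{\omega^q})$, $(b^2,0,0,0,d^2,\tfrac{d(b+d\omega^q)+\omega^q}{\omega})$, $(0,0,0,0,0,1)$, and let $G$ be the group of projectivities $X\mapsto M_{a,b,c,d}X$. Fix $\gamma\in\mathbb F_{q^2}$ with $X^2+X+\gamma$ irreducible over $\mathbb F_{q^2}$, let $S_\gamma=\left(\frac{\gamma}{\omega},\frac{\gamma^q}{\omega^q},\frac{\omega^q\gamma}{\omega}+\frac{\omega\gamma^q}{\omega^q},1,1,1\right)$, $S_\gamma^G$ its $G$-orbit, and $\mathcal O=\mathcal Q\cup S_\gamma^G$. Let $\mathcal S$ be the set of the $q^2+1$ lines $S_t=\{(\lambda,\lambda^q,\lambda t+\lambda^qt^q,\lambda^qt^{2q},\lambda t^2,0):\lambda\in\mathbb F_{q^2}^*\}$, $t\in\mathbb F_{q^2}$, and $S_\infty=\{(0,0,0,\lambda^q,\lambda,0):\lambda\in\mathbb F_{q^2}^*\}$. *)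

theory Defs
  imports "HOL-Computational_Algebra.Polynomial" "HOL-Computational_Algebra.Primes"
begin

text \<open>Vectors of F_{q^2}^6 are functions nat => 'a supported on indices 1..6.
  A point of PG(5,q^2) is the set of nonzero scalar multiples of a nonzero vector.\<close>

definition vec6 :: "'a::zero \<Rightarrow> 'a \<Rightarrow> 'a \<Rightarrow> 'a \<Rightarrow> 'a \<Rightarrow> 'a \<Rightarrow> nat \<Rightarrow> 'a" where
  "vec6 x1 x2 x3 x4 x5 x6 = (\<lambda>i. if i = 1 then x1 else if i = 2 then x2 else if i = 3 then x3
     else if i = 4 then x4 else if i = 5 then x5 else if i = 6 then x6 else 0)"

definition pt :: "(nat \<Rightarrow> 'a::field) \<Rightarrow> (nat \<Rightarrow> 'a) set" where
  "pt v = {(\<lambda>i. c * v i) | c. c \<noteq> 0}"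

definition subF :: "nat \<Rightarrow> 'a::field set" where
  "subF q = {x. x ^ q = x}"

definition Sigma :: "nat \<Rightarrow> (nat \<Rightarrow> 'a::field) set set" where
  "Sigma q = {pt (vec6 \<alpha> (\<alpha>^q) d0 \<beta> (\<beta>^q) d1) | \<alpha> \<beta> d0 d1.
      d0 \<in> subF q \<and> d1 \<in> subF q \<and> vec6 \<alpha> (\<alpha>^q) d0 \<beta> (\<beta>^q) d1 \<noteq> (\<lambda>_. 0)}"

definition Qset :: "nat \<Rightarrow> (nat \<Rightarrow> 'a::field) set set" where
  "Qset q = {P \<in> Sigma q. \<exists>v\<in>P. v 6 = 0 \<and> (v 3)^2 + v 1 * v 5 + v 2 * v 4 = 0}"

definition hform :: "nat \<Rightarrow> 'a::field \<Rightarrow> (nat \<Rightarrow> 'a) \<Rightarrow> (nat \<Rightarrow> 'a) \<Rightarrow> 'a" where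
  "hform q \<omega> X Y =
     \<omega> * X 1 * (Y 4)^q + \<omega>^q * X 1 * (Y 6)^q + \<omega>^q * X 2 * (Y 5)^q + \<omega> * X 2 * (Y 6)^q
   + X 3 * (Y 6)^q + \<omega>^q * X 4 * (Y 1)^q + \<omega> * X 5 * (Y 2)^q + \<omega> * X 6 * (Y 1)^q
   + \<omega>^q * X 6 * (Y 2)^q + X 6 * (Y 3)^q"

definition perp :: "nat \<Rightarrow> 'a::field \<Rightarrow> (nat \<Rightarrow> 'a) set \<Rightarrow> (nat \<Rightarrow> 'a) set \<Rightarrow> bool" where
  "perp q \<omega> P R \<longleftrightarrow> (\<exists>v\<in>P. \<exists>w\<in>R. hform q \<omega> v w = 0)"

definition pgline :: "(nat \<Rightarrow> 'a::field) set \<Rightarrow> (nat \<Rightarrow> 'a) set \<Rightarrow> (nat \<Rightarrow> 'a) set set" where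
  "pgline P R = {X. \<exists>u\<in>P. \<exists>w\<in>R. \<exists>a b. (a \<noteq> 0 \<or> b \<noteq> 0) \<and> X = pt (\<lambda>i. a * u i + b * w i)}"

definition sigma_line :: "nat \<Rightarrow> (nat \<Rightarrow> 'a::field) set set \<Rightarrow> bool" where
  "sigma_line q L \<longleftrightarrow> (\<exists>P\<in>Sigma q. \<exists>R\<in>Sigma q. P \<noteq> R \<and> L = Sigma q \<inter> pgline P R)"

definition W_line :: "nat \<Rightarrow> 'a::field \<Rightarrow> (nat \<Rightarrow> 'a) set set \<Rightarrow> bool" where
  "W_line q \<omega> L \<longleftrightarrow> sigma_line q L \<and> (\<forall>X\<in>L. \<forall>Y\<in>L. perp q \<omega> X Y)"

definition Mrows :: "nat \<Rightarrow> 'a::field \<Rightarrow> 'a \<Rightarrow> 'a \<Rightarrow> 'a \<Rightarrow> 'a \<Rightarrow> nat \<Rightarrow> nat \<Rightarrow> 'a" where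
  "Mrows q \<omega> a b c d = (\<lambda>i.
     if i = 1 then vec6 (a^2) 0 0 0 (c^2) (c * (a + c * \<omega>^q) / \<omega>)
     else if i = 2 then vec6 0 (a^(2*q)) 0 (c^(2*q)) 0 (c^q * (a^q + c^q * \<omega>) / \<omega>^q)
     else if i = 3 then vec6 (a*b) (a^q * b^q) 1 (c^q * d^q) (c*d)
        (d * (a + c * \<omega>^q) / \<omega> + d^q * (a^q + c^q * \<omega>) / \<omega>^q + 1 / \<omega>^(q+1))
     else if i = 4 then vec6 0 (b^(2*q)) 0 (d^(2*q)) 0 ((d^q * (b^q + d^q * \<omega>) + \<omega>) / \<omega>^q)
     else if i = 5 then vec6 (b^2) 0 0 0 (d^2) ((d * (b + d * \<omega>^q) + \<omega>^q) / \<omega>)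
     else if i = 6 then vec6 0 0 0 0 0 1
     else (\<lambda>_. 0))"

definition mat_app :: "(nat \<Rightarrow> nat \<Rightarrow> 'a::field) \<Rightarrow> (nat \<Rightarrow> 'a) \<Rightarrow> nat \<Rightarrow> 'a" where
  "mat_app M v = (\<lambda>i. if 1 \<le> i \<and> i \<le> 6 then (\<Sum>j=1..6. M i j * v j) else 0)"

definition S_gamma :: "nat \<Rightarrow> 'a::field \<Rightarrow> 'a \<Rightarrow> nat \<Rightarrow> 'a" where
  "S_gamma q \<omega> \<gamma> = vec6 (\<gamma> / \<omega>) (\<gamma>^q / \<omega>^q) (\<omega>^q * \<gamma> / \<omega> + \<omega> * \<gamma>^q / \<omega>^q) 1 1 1"

definition orbit_S :: "nat \<Rightarrow> 'a::field \<Rightarrow> 'a \<Rightarrow> (nat \<Rightarrow> 'a) set set" where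
  "orbit_S q \<omega> \<gamma> = {pt (mat_app (Mrows q \<omega> a b c d) (S_gamma q \<omega> \<gamma>)) | a b c d. a * d + b * c = 1}"

definition Oset :: "nat \<Rightarrow> 'a::field \<Rightarrow> 'a \<Rightarrow> (nat \<Rightarrow> 'a) set set" where
  "Oset q \<omega> \<gamma> = Qset q \<union> orbit_S q \<omega> \<gamma>"

definition S_line :: "nat \<Rightarrow> 'a::field \<Rightarrow> (nat \<Rightarrow> 'a) set set" where
  "S_line q t = {pt (vec6 l (l^q) (l * t + l^q * t^q) (l^q * t^(2*q)) (l * t^2) 0) | l. l \<noteq> 0}"

definition S_inf :: "nat \<Rightarrow> (nat \<Rightarrow> 'a::field) set set" where
  "S_inf q = {pt (vec6 0 0 0 (l^q) l 0) | l. l \<noteq> 0}"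

definition spread :: "nat \<Rightarrow> (nat \<Rightarrow> 'a::field) set set set" where
  "spread q = range (S_line q) \<union> {S_inf q}"

end

theory Submission
  imports Defs "HOL-Number_Theory.Residues"
begin

lemma irr_noroot:
  fixes \<gamma> :: "'a::field"
  assumes "irreducible [:\<gamma>, 1, 1:]" shows "t^2 + t + \<gamma> \<noteq> 0"
proof
  assume h: "t^2 + t + \<gamma> = 0"
  let ?p = "[:\<gamma>, 1, 1:]"
  have "poly ?p t = 0" using h by (simp add: algebra_simps power2_eq_square)
  then obtain r where r: "?p = [:-t,1:] * r" using poly_eq_0_iff_dvd by (metis dvdE)
  have "[:-t,1:] dvd 1 \<or> r dvd 1" using irreducibleD[OF assms r] .
  moreover have "\<not> [:-t,1:] dvd 1" by (simp add: is_unit_poly_iff)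
  moreover have "\<not> r dvd 1"
  proof
    assume "r dvd 1"
    then obtain c where "r = [:c:]" by (auto simp: is_unit_poly_iff)
    hence "degree ?p \<le> degree [:-t,1:] + degree [:c:]" using r by (metis degree_mult_le)
    hence "degree ?p \<le> 1" by simp
    thus False by simp
  qed
  ultimately show False by blast
qed


locale gq =
  fixes q :: nat and e :: nat and \<omega> \<gamma> :: "'a::{field,finite}"
  assumes q_def: "q = 2^e" and e_pos: "1 \<le> e"
    and cardF: "card (UNIV::'a set) = q^2"
    and om_notin: "\<omega>^q \<noteq> \<omega>" and om_tr: "\<omega> + \<omega>^q = 1"
    and gam: "\<And>t. t^2 + t + \<gamma> \<noteq> 0"
begin

lemma two: "(2::'a) = 0"
proof -
  have pos: "CHAR('a) > 0" by (rule finite_imp_CHAR_pos) simp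
  hence pr: "prime CHAR('a)" by (rule prime_CHAR_semidom)
  have "CHAR('a) dvd card (UNIV::'a set)" by (rule CHAR_dvd_CARD)
  hence "CHAR('a) dvd 2^(2*e)" using cardF q_def by (simp add: power_mult[symmetric] mult.commute)
  hence "CHAR('a) dvd 2" using pr prime_dvd_power_nat by blast
  hence "CHAR('a) = 2" using pr by (simp add: primes_dvd_imp_eq)
  thus ?thesis by (metis of_nat_CHAR of_nat_numeral)
qed

lemma num0: "(numeral (num.Bit0 n) :: 'a) = 0"
  by (metis mult_2 mult_zero_left numeral_Bit0 two)
lemma num1: "(numeral (num.Bit1 n) :: 'a) = 1"
  by (metis add.commute add_0 mult_2 mult_zero_left numeral_Bit0 numeral_Bit1 two)
lemma xx: "(x::'a) + x = 0" by (metis mult_2 mult_zero_left two)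
lemma xxy: "(x::'a) + (x + y) = y" by (metis add.assoc add_0 xx)
lemma negc: "-(x::'a) = x" by (metis add_eq_0_iff2 xx)
lemma diffc: "(x::'a) - y = x + y" by (metis diff_conv_add_uminus negc)
lemmas c2s = num0 num1 xx xxy negc diffc

lemma q_pos: "q \<ge> 2" using q_def e_pos
  by (metis One_nat_def le_add_diff_inverse numeral_le_iff one_le_numeral power_increasing power_one_right)
lemma q_even: "q = 2 * (q div 2)" using q_def e_pos
  by (metis dvd_mult_div_cancel dvd_power le_numeral_extra(2) not_one_le_zero pos2 power_0 zero_less_iff_neq_zero)

lemma sq_add: "((x::'a) + y)^2 = x^2 + y^2"
  by (simp add: algebra_simps power2_eq_square c2s)

lemma pow2_add: "((x::'a) + y)^(2^n) = x^(2^n) + y^(2^n)"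
proof (induction n)
  case 0 thus ?case by simp
next
  case (Suc n)
  have "(x+y)^(2^Suc n) = ((x+y)^(2^n))^2" by (simp add: power_mult[symmetric] mult.commute)
  also have "\<dots> = (x^(2^n))^2 + (y^(2^n))^2" using Suc sq_add by simp
  also have "\<dots> = x^(2^Suc n) + y^(2^Suc n)" by (simp add: power_mult[symmetric] mult.commute)
  finally show ?case .
qed

lemma frob_add: "((x::'a) + y)^q = x^q + y^q" using pow2_add q_def by simp

lemma fermat_units: assumes "(a::'a) \<noteq> 0" shows "a^(card (UNIV::'a set) - 1) = 1"
proof -
  let ?U = "UNIV - {0::'a}"
  have fin: "finite ?U" by simp
  have bij: "bij_betw (\<lambda>x. a*x) ?U ?U"
    by (rule bij_betwI[where g="\<lambda>x. x/a"]) (use assms in auto)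
  have "(\<Prod>x\<in>?U. a*x) = (\<Prod>x\<in>?U. x)"
    using prod.reindex_bij_betw[OF bij, of "\<lambda>x. x"] by simp
  moreover have "(\<Prod>x\<in>?U. a*x) = a^card ?U * (\<Prod>x\<in>?U. x)"
    by (simp add: prod.distrib)
  moreover have "(\<Prod>x\<in>?U. x) \<noteq> 0" by (simp add: prod_zero_iff)
  moreover have "card ?U = card (UNIV::'a set) - 1" by (simp add: card_Diff_singleton)
  ultimately show ?thesis by (metis mult_cancel_right2)
qed

lemma fermat: "(x::'a)^(q*q) = x"
proof (cases "x = 0")
  case True thus ?thesis using q_pos by simp
next
  case False
  have c: "q*q = (card (UNIV::'a set) - 1) + 1" using cardF q_pos by (simp add: power2_eq_square)
  show ?thesis using fermat_units[OF False] by (simp add: c power_add)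
qed

lemma frob_frob[simp]: "((x::'a)^q)^q = x" by (simp add: power_mult[symmetric] fermat)

lemma frob_inj: "((x::'a)^q = y^q) = (x = y)" by (metis frob_frob)
lemma frob_0_iff[simp]: "((x::'a)^q = 0) = (x = 0)" using q_pos by simp

definition tr :: "'a \<Rightarrow> 'a" where "tr x = x + x^q"
definition Fq :: "'a set" where "Fq = {x. x^q = x}"

lemma Fq_iff: "x \<in> Fq \<longleftrightarrow> x^q = x" by (simp add: Fq_def)
lemma subF_eq: "subF q = Fq" by (simp add: subF_def Fq_def)

lemma tr_Fq: "tr x \<in> Fq" by (simp add: Fq_iff tr_def frob_add add.commute)
lemma tr_add: "tr (x + y) = tr x + tr y" by (simp add: tr_def frob_add algebra_simps)
lemma tr_mult_Fq: "k \<in> Fq \<Longrightarrow> tr (k * x) = k * tr x" by (simp add: tr_def Fq_iff power_mult_distrib algebra_simps)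
lemma tr_zero_iff: "tr x = 0 \<longleftrightarrow> x \<in> Fq" by (auto simp: tr_def Fq_iff c2s add_eq_0_iff2)

lemma Fq_add: "x \<in> Fq \<Longrightarrow> y \<in> Fq \<Longrightarrow> x + y \<in> Fq" by (simp add: Fq_iff frob_add)
lemma Fq_mult: "x \<in> Fq \<Longrightarrow> y \<in> Fq \<Longrightarrow> x * y \<in> Fq" by (simp add: Fq_iff power_mult_distrib)
lemma Fq_div: "x \<in> Fq \<Longrightarrow> y \<in> Fq \<Longrightarrow> x / y \<in> Fq" by (simp add: Fq_iff power_divide)
lemma Fq_pow: "x \<in> Fq \<Longrightarrow> x^n \<in> Fq" unfolding Fq_iff by (metis power_mult mult.commute)
lemma Fq_0[simp]: "0 \<in> Fq" using q_pos by (simp add: Fq_iff)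
lemma Fq_1[simp]: "1 \<in> Fq" by (simp add: Fq_iff)

lemma omq: "\<omega>^q = 1 + \<omega>" using om_tr by (metis add.commute xxy)
lemma om_nz: "\<omega> \<noteq> 0" using om_notin q_pos by auto
lemma om1_nz: "1 + \<omega> \<noteq> 0" using om_nz omq by (metis frob_0_iff)
lemma om_notFq: "\<omega> \<notin> Fq" using om_notin Fq_iff by auto

lemma tr_om: "tr \<omega> = 1" by (simp add: tr_def om_tr)

end

context gq begin

lemma eq_iff_sum0: "((a::'a) = b) = (a + b = 0)" by (metis add_eq_0_iff2 negc)

lemma decomp: "x = tr (\<omega>^q * x) + tr x * \<omega>"
proof -
  have "tr (\<omega>^q*x) = \<omega>^q*x + \<omega>*x^q" by (simp add: tr_def power_mult_distrib)
  thus ?thesis by (simp add: tr_def omq algebra_simps c2s)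
qed

lemma tr_omq: "tr (\<omega>^q) = 1" by (simp add: tr_def omq c2s frob_add)

lemma Fq_om_indep: "s \<in> Fq \<Longrightarrow> r \<in> Fq \<Longrightarrow> s + r * \<omega> = 0 \<Longrightarrow> s = 0 \<and> r = 0"
proof -
  assume s: "s \<in> Fq" and r: "r \<in> Fq" and h: "s + r*\<omega> = 0"
  have "r = 0"
  proof (rule ccontr)
    assume "r \<noteq> 0"
    hence "\<omega> = s / r" using h by (simp add: field_simps c2s) (metis add_eq_0_iff2 c2s(5))
    hence "\<omega> \<in> Fq" using s r Fq_div by simp
    thus False using om_notFq by simp
  qed
  thus ?thesis using h by simp
qed

lemma card_Fq: "card Fq = q"
proof -
  have bij: "bij_betw (\<lambda>(s,r). s + r*\<omega>) (Fq \<times> Fq) (UNIV::'a set)"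
  proof (rule bij_betwI')
    fix x y assume "x \<in> Fq \<times> Fq" "y \<in> Fq \<times> Fq"
    then obtain s r s' r' where xy: "x = (s,r)" "y = (s',r')" "s \<in> Fq" "r \<in> Fq" "s' \<in> Fq" "r' \<in> Fq" by auto
    have "(s + r*\<omega> = s' + r'*\<omega>) = ((s+s') + (r+r')*\<omega> = 0)" by (subst eq_iff_sum0) (simp add: algebra_simps)
    also have "\<dots> = (s + s' = 0 \<and> r + r' = 0)" using Fq_om_indep[of "s+s'" "r+r'"] Fq_add xy by auto
    also have "\<dots> = (s = s' \<and> r = r')" by (metis add_eq_0_iff2 negc)
    finally show "((\<lambda>(s,r). s + r*\<omega>) x = (\<lambda>(s,r). s + r*\<omega>) y) = (x = y)" using xy by auto
  next
    fix x assume "x \<in> Fq \<times> Fq" thus "(\<lambda>(s,r). s + r*\<omega>) x \<in> UNIV" by simp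
  next
    fix y :: 'a
    show "\<exists>x\<in>Fq \<times> Fq. y = (\<lambda>(s, r). s + r * \<omega>) x"
      by (rule bexI[of _ "(tr (\<omega>^q * y), tr y)"]) (auto simp: tr_Fq intro: decomp)
  qed
  have "card (UNIV::'a set) = card Fq * card Fq" using bij_betw_same_card[OF bij] by (simp add: card_cartesian_product)
  hence "q^2 = (card Fq)^2" using cardF by (simp add: power2_eq_square)
  thus ?thesis by (simp add: power2_eq_iff_nonneg)
qed

lemma finite_Fq[simp]: "finite Fq" by simp

lemma sq_inj: "((x::'a)^2 = y^2) = (x = y)"
proof
  assume "x^2 = y^2"
  hence "(x+y)^2 = 0" by (simp add: sq_add xx)
  thus "x = y" by (simp add: add_eq_0_iff2 negc)
qed simp

lemma sqrt_ex: "\<exists>y::'a. y^2 = x"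
proof -
  have "inj (\<lambda>y::'a. y^2)" by (rule injI) (simp add: sq_inj)
  hence "surj (\<lambda>y::'a. y^2)" by (simp add: finite_UNIV_inj_surj)
  thus ?thesis by (metis surjD)
qed

lemma sq_Fq: "y^2 \<in> Fq \<Longrightarrow> y \<in> Fq"
  unfolding Fq_iff by (metis power_mult mult.commute sq_inj)

lemma N_def': "\<omega>^(q+1) = \<omega> + \<omega>^2" by (simp add: omq algebra_simps power2_eq_square)

definition Psi :: "'a \<Rightarrow> 'a" where "Psi t = t^2 + t"
lemma Psi_add: "Psi (x + y) = Psi x + Psi y" by (simp add: Psi_def sq_add algebra_simps)
lemma gam_notPsi: "Psi t \<noteq> \<gamma>" using gam[of t] by (auto simp: Psi_def xx)

lemma card_Psi: "card (range Psi) * 2 = card (UNIV::'a set)"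
proof -
  have fib: "\<And>h. h \<in> range Psi \<Longrightarrow> card (Psi -` {h}) = 2"
  proof -
    fix h assume "h \<in> range Psi"
    then obtain t where t: "h = Psi t" by auto
    have "\<And>x. Psi x = Psi t \<longleftrightarrow> x = t \<or> x = t + 1"
    proof -
      fix x
      have "Psi x = Psi t \<longleftrightarrow> Psi (x + t) = 0" by (subst eq_iff_sum0) (simp add: Psi_add)
      also have "\<dots> \<longleftrightarrow> (x+t)*(x+t+1) = 0" by (simp add: Psi_def algebra_simps power2_eq_square c2s)
      also have "\<dots> \<longleftrightarrow> x + t = 0 \<or> x + t + 1 = 0" by simp
      also have "\<dots> \<longleftrightarrow> x = t \<or> x = t + 1" by (metis eq_iff_sum0 add.assoc)
      finally show "Psi x = Psi t \<longleftrightarrow> x = t \<or> x = t + 1" .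
    qed
    hence "Psi -` {h} = {t, t+1}" using t by auto
    moreover have "t \<noteq> t + 1" by simp
    ultimately show "card (Psi -` {h}) = 2" by simp
  qed
  have "UNIV = (\<Union>h\<in>range Psi. Psi -` {h})" by auto
  hence "card (UNIV::'a set) = card (\<Union>h\<in>range Psi. Psi -` {h})" by simp
  also have "\<dots> = (\<Sum>h\<in>range Psi. card (Psi -` {h}))"
    by (rule card_UN_disjoint) auto
  also have "\<dots> = (\<Sum>h\<in>range Psi. 2)" using fib by simp
  finally show ?thesis by simp
qed

lemma Psi_cover: "x \<in> range Psi \<or> x + \<gamma> \<in> range Psi"
proof -
  let ?H = "range Psi"
  have disj: "?H \<inter> ((\<lambda>h. h + \<gamma>) ` ?H) = {}"
  proof (auto)
    fix a b assume "Psi a = Psi b + \<gamma>"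
    hence "Psi (a + b) = \<gamma>" by (simp add: Psi_add algebra_simps c2s)
    thus False using gam_notPsi by blast
  qed
  have ci: "card ((\<lambda>h. h + \<gamma>) ` ?H) = card ?H" by (rule card_image) (simp add: inj_on_def)
  have "card (?H \<union> (\<lambda>h. h + \<gamma>) ` ?H) = card (UNIV::'a set)"
    using card_Un_disjoint[OF _ _ disj] ci card_Psi by simp
  hence "?H \<union> (\<lambda>h. h + \<gamma>) ` ?H = UNIV" by (simp add: card_subset_eq)
  hence "x \<in> ?H \<union> (\<lambda>h. h + \<gamma>) ` ?H" by simp
  thus ?thesis by (auto simp: c2s)
qed

definition Nf :: "'a \<Rightarrow> 'a \<Rightarrow> 'a" where "Nf a c = \<gamma>*a^2 + a*c + c^2"

lemma Nf_ex: assumes "A \<noteq> 0" shows "\<exists>a c. Nf a c = A"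
proof -
  have "\<exists>w. A * w^2 + \<gamma> \<in> range Psi"
  proof (rule ccontr)
    assume "\<not> ?thesis"
    hence "\<forall>w. A*w^2 \<in> range Psi" using Psi_cover by (metis add.assoc add.commute xxy)
    moreover obtain w where "w^2 = \<gamma>/A" using sqrt_ex by blast
    ultimately have "\<gamma> \<in> range Psi" using assms by (metis nonzero_mult_div_cancel_left times_divide_eq_right)
    thus False using gam_notPsi by auto
  qed
  then obtain w t where wt: "Psi t = A*w^2 + \<gamma>" by (metis image_iff rangeE)
  have w: "w \<noteq> 0" using wt gam_notPsi by auto
  have "Nf (1/w) (t/w) * w^2 = \<gamma> + t + t^2" using w by (simp add: Nf_def field_simps power2_eq_square)
  hence "Nf (1/w) (t/w) = (\<gamma> + t + t^2)/w^2" using w by (simp add: field_simps)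
  also have "\<gamma> + t + t^2 = A*w^2" using wt by (simp add: Psi_def algebra_simps c2s)
  finally show ?thesis using w by auto
qed

end


definition sm :: "'a::field \<Rightarrow> (nat \<Rightarrow> 'a) \<Rightarrow> nat \<Rightarrow> 'a" where "sm c v = (\<lambda>i. c * v i)"
definition vadd :: "(nat \<Rightarrow> 'a::field) \<Rightarrow> (nat \<Rightarrow> 'a) \<Rightarrow> nat \<Rightarrow> 'a" where "vadd v w = (\<lambda>i. v i + w i)"

lemma vec6_simps[simp]:
  "vec6 x1 x2 x3 x4 x5 x6 1 = x1" "vec6 x1 x2 x3 x4 x5 x6 (Suc 0) = x1" "vec6 x1 x2 x3 x4 x5 x6 2 = x2" "vec6 x1 x2 x3 x4 x5 x6 3 = x3"
  "vec6 x1 x2 x3 x4 x5 x6 4 = x4" "vec6 x1 x2 x3 x4 x5 x6 5 = x5" "vec6 x1 x2 x3 x4 x5 x6 6 = x6"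
  by (simp_all add: vec6_def)

lemma vec6_eq_iff: "(vec6 x1 x2 x3 x4 x5 x6 = vec6 y1 y2 y3 y4 y5 y6) =
   (x1 = y1 \<and> x2 = y2 \<and> x3 = y3 \<and> x4 = y4 \<and> x5 = y5 \<and> x6 = y6)"
proof
  assume h: "vec6 x1 x2 x3 x4 x5 x6 = vec6 y1 y2 y3 y4 y5 y6"
  have "\<And>i. vec6 x1 x2 x3 x4 x5 x6 i = vec6 y1 y2 y3 y4 y5 y6 i" using h by simp
  from this[of 1] this[of 2] this[of 3] this[of 4] this[of 5] this[of 6]
  show "x1 = y1 \<and> x2 = y2 \<and> x3 = y3 \<and> x4 = y4 \<and> x5 = y5 \<and> x6 = y6" by simp
qed simp

lemma sm_vec6: "sm c (vec6 x1 x2 x3 x4 x5 x6) = vec6 (c*x1) (c*x2) (c*x3) (c*x4) (c*x5) (c*x6)"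
  by (auto simp: sm_def vec6_def fun_eq_iff)
lemma vadd_vec6: "vadd (vec6 x1 x2 x3 x4 x5 x6) (vec6 y1 y2 y3 y4 y5 y6) = vec6 (x1+y1) (x2+y2) (x3+y3) (x4+y4) (x5+y5) (x6+y6)"
  by (auto simp: vadd_def vec6_def fun_eq_iff)
lemma vec6_zero_iff: "(vec6 x1 x2 x3 x4 x5 x6 = (\<lambda>_. 0)) = (x1 = 0 \<and> x2 = 0 \<and> x3 = 0 \<and> x4 = 0 \<and> x5 = 0 \<and> x6 = 0)"
proof -
  have "(\<lambda>_. 0) = vec6 0 0 0 0 0 (0::'a)" by (auto simp: vec6_def fun_eq_iff)
  thus ?thesis by (simp add: vec6_eq_iff)
qed

lemma pt_alt: "pt v = {sm c v | c. c \<noteq> 0}" by (simp add: pt_def sm_def)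

lemma pt_mem: "v \<in> pt v" unfolding pt_alt by (rule CollectI, rule exI[of _ 1]) (simp add: sm_def)

lemma pt_sm: "c \<noteq> 0 \<Longrightarrow> pt (sm c v) = pt v"
  unfolding pt_alt
proof (auto simp: sm_def)
  fix d :: 'a assume "c \<noteq> 0" "d \<noteq> 0"
  thus "\<exists>e. (\<lambda>i. d * (c * v i)) = (\<lambda>i. e * v i) \<and> e \<noteq> 0" by (intro exI[of _ "d*c"]) auto
next
  fix d :: 'a assume "c \<noteq> 0" "d \<noteq> 0"
  thus "\<exists>e. (\<lambda>i. d * v i) = (\<lambda>i. e * (c * v i)) \<and> e \<noteq> 0" by (intro exI[of _ "d/c"]) auto
qed

lemma pt_eq_iff: assumes "v \<noteq> (\<lambda>_. 0)"
  shows "pt v = pt w \<longleftrightarrow> (\<exists>c. c \<noteq> 0 \<and> w = sm c v)"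
proof
  assume "pt v = pt w"
  hence "v \<in> pt w" using pt_mem by blast
  then obtain c where c: "c \<noteq> 0" "v = sm c w" by (auto simp: pt_alt)
  hence "w = sm (1/c) v" by (auto simp: sm_def fun_eq_iff)
  thus "\<exists>c. c \<noteq> 0 \<and> w = sm c v" using c by (intro exI[of _ "1/c"]) auto
next
  assume "\<exists>c. c \<noteq> 0 \<and> w = sm c v"
  thus "pt v = pt w" using pt_sm by metis
qed

context gq begin

definition isW :: "(nat \<Rightarrow> 'a) \<Rightarrow> bool" where
  "isW v \<longleftrightarrow> (\<forall>i. i \<notin> {1..6} \<longrightarrow> v i = 0) \<and> v 2 = (v 1)^q \<and> v 5 = (v 4)^q \<and> v 3 \<in> Fq \<and> v 6 \<in> Fq"

lemma vec6_out: "i \<notin> {1..6} \<Longrightarrow> vec6 x1 x2 x3 x4 x5 x6 i = 0"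
  by (auto simp: vec6_def)

lemma isW_vec6: "isW (vec6 a (a^q) d b (b^q) f) \<longleftrightarrow> d \<in> Fq \<and> f \<in> Fq"
  by (simp add: isW_def vec6_out)

lemma vec6_expand: "(\<forall>i. i \<notin> {1..6} \<longrightarrow> v i = 0) \<Longrightarrow> v = vec6 (v 1) (v 2) (v 3) (v 4) (v 5) (v 6)"
proof (rule ext)
  fix i assume h: "\<forall>i. i \<notin> {1..6} \<longrightarrow> v i = 0"
  show "v i = vec6 (v 1) (v 2) (v 3) (v 4) (v 5) (v 6) i"
  proof (cases "i \<in> {1..6}")
    case True
    hence "i = 1 \<or> i = 2 \<or> i = 3 \<or> i = 4 \<or> i = 5 \<or> i = 6" by auto
    thus ?thesis by auto
  next
    case False thus ?thesis using h by (simp add: vec6_out)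
  qed
qed

lemma isW_E: assumes "isW v" obtains a d b f where "v = vec6 a (a^q) d b (b^q) f" "d \<in> Fq" "f \<in> Fq"
proof -
  have "v = vec6 (v 1) (v 2) (v 3) (v 4) (v 5) (v 6)" using assms isW_def vec6_expand by blast
  thus ?thesis using that assms unfolding isW_def by metis
qed

lemma isW_lin: "isW v \<Longrightarrow> isW w \<Longrightarrow> s \<in> Fq \<Longrightarrow> t \<in> Fq \<Longrightarrow> isW (vadd (sm s v) (sm t w))"
  by (auto simp: isW_def vadd_def sm_def Fq_iff frob_add power_mult_distrib Fq_add Fq_mult)

lemma isW_sm: "isW v \<Longrightarrow> s \<in> Fq \<Longrightarrow> isW (sm s v)"
  by (auto simp: isW_def sm_def Fq_iff power_mult_distrib Fq_mult)

lemma Sigma_eq: "Sigma q = {pt v | v. isW v \<and> v \<noteq> (\<lambda>_. 0)}"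
proof (intro Set.set_eqI iffI)
  fix P :: "(nat \<Rightarrow> 'a) set" assume "P \<in> Sigma q"
  then obtain a b d f where "P = pt (vec6 a (a^q) d b (b^q) f)" "d \<in> Fq" "f \<in> Fq" "vec6 a (a^q) d b (b^q) f \<noteq> (\<lambda>_. 0)"
    unfolding Sigma_def subF_eq by blast
  thus "P \<in> {pt v | v. isW v \<and> v \<noteq> (\<lambda>_. 0)}" using isW_vec6 by blast
next
  fix P assume "P \<in> {pt v | v. isW v \<and> v \<noteq> (\<lambda>_. 0)}"
  then obtain v where "P = pt v" "isW v" "v \<noteq> (\<lambda>_. 0)" by blast
  then obtain a d b f where "v = vec6 a (a^q) d b (b^q) f" "d \<in> Fq" "f \<in> Fq" by (metis isW_E)
  thus "P \<in> Sigma q" unfolding Sigma_def subF_eq using \<open>P = pt v\<close> \<open>v \<noteq> _\<close> by blast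
qed

definition indep :: "(nat \<Rightarrow> 'a) \<Rightarrow> (nat \<Rightarrow> 'a) \<Rightarrow> bool" where
  "indep v w \<longleftrightarrow> (\<forall>s t. s \<in> Fq \<longrightarrow> t \<in> Fq \<longrightarrow> vadd (sm s v) (sm t w) = (\<lambda>_. 0) \<longrightarrow> s = 0 \<and> t = 0)"

end

context gq begin

lemma sm_0[simp]: "sm 0 v = (\<lambda>_. 0)" by (simp add: sm_def)
lemma sm_1[simp]: "sm 1 v = v" by (simp add: sm_def)
lemma sm_sm: "sm a (sm b v) = sm (a*b) v" by (simp add: sm_def fun_eq_iff)
lemma sm_zero_iff: "(sm c v = (\<lambda>_. 0)) = (c = 0 \<or> v = (\<lambda>_. 0))" by (auto simp: sm_def fun_eq_iff)
lemma vadd_0[simp]: "vadd (\<lambda>_. 0) v = v" "vadd v (\<lambda>_. 0) = v" by (simp_all add: vadd_def)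

lemma isW_scale_Fq: assumes "isW v" "isW (sm c v)" "v \<noteq> (\<lambda>_. 0)" shows "c \<in> Fq"
proof -
  obtain a d b f where v: "v = vec6 a (a^q) d b (b^q) f" "d \<in> Fq" "f \<in> Fq" using assms(1) isW_E by blast
  have w: "sm c v = vec6 (c*a) (c*a^q) (c*d) (c*b) (c*b^q) (c*f)" using v by (simp add: sm_vec6)
  have c2: "c*a^q = (c*a)^q" and c5: "c*b^q = (c*b)^q" and c3: "c*d \<in> Fq" and c6: "c*f \<in> Fq"
    using assms(2) unfolding w isW_def by auto
  show ?thesis
  proof (cases "a \<noteq> 0")
    case True thus ?thesis using c2 by (simp add: Fq_iff power_mult_distrib)
  next
    case a: False
    show ?thesis
    proof (cases "b \<noteq> 0")
      case True thus ?thesis using c5 by (simp add: Fq_iff power_mult_distrib)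
    next
      case b: False
      show ?thesis
      proof (cases "d \<noteq> 0")
        case True
        hence "c = (c*d)/d" by simp
        thus ?thesis using c3 v(2) Fq_div by metis
      next
        case d: False
        have "f \<noteq> 0" using assms(3) a b d v(1) q_pos by (auto simp: vec6_zero_iff)
        hence "c = (c*f)/f" by simp
        thus ?thesis using c6 v(3) Fq_div by metis
      qed
    qed
  qed
qed

lemma pt_Sigma_eq: assumes "isW v" "isW w" "v \<noteq> (\<lambda>_. 0)"
  shows "pt v = pt w \<longleftrightarrow> (\<exists>k. k \<in> Fq \<and> k \<noteq> 0 \<and> w = sm k v)"
  using pt_eq_iff[OF assms(3)] isW_scale_Fq assms by metis

lemma indep_nz: fixes v w :: "nat \<Rightarrow> 'a" shows "indep v w \<Longrightarrow> v \<noteq> (\<lambda>_. 0) \<and> w \<noteq> (\<lambda>_. 0)"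
proof -
  assume h: "indep v w"
  have "v = (\<lambda>_. 0) \<Longrightarrow> vadd (sm 0 v) (sm 1 w) = w" by simp
  have a: "v \<noteq> (\<lambda>_. 0)"
  proof
    assume "v = (\<lambda>_. 0)"
    hence "vadd (sm 1 v) (sm 0 w) = (\<lambda>_. 0)" by simp
    thus False using h[unfolded indep_def, rule_format, OF Fq_1 Fq_0] by simp
  qed
  have b: "w \<noteq> (\<lambda>_. 0)"
  proof
    assume "w = (\<lambda>_. 0)"
    hence "vadd (sm 0 v) (sm 1 w) = (\<lambda>_. 0)" by simp
    thus False using h[unfolded indep_def, rule_format, OF Fq_0 Fq_1] by simp
  qed
  show ?thesis using a b by simp
qed

lemma vadd_zero_eq: fixes v w :: "nat \<Rightarrow> 'a" shows "vadd (sm a v) (sm b w) = (\<lambda>_. 0) \<Longrightarrow> a \<noteq> 0 \<Longrightarrow> v = sm (b/a) w"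
proof -
  assume h: "vadd (sm a v) (sm b w) = (\<lambda>_. 0)" and a: "a \<noteq> 0"
  have "\<And>i. a * v i + b * w i = 0" using h by (simp add: vadd_def sm_def fun_eq_iff)
  hence "\<And>i. a * v i = b * w i" by (metis eq_iff_sum0)
  hence "\<And>i. v i = b / a * w i" using a by (simp add: field_simps)
  thus "v = sm (b/a) w" by (simp add: sm_def fun_eq_iff)
qed

lemma Findep: fixes v w :: "nat \<Rightarrow> 'a" assumes "isW v" "isW w" "indep v w" "vadd (sm u v) (sm t w) = (\<lambda>_. 0)"
  shows "u = 0 \<and> t = 0"
proof (cases "u = 0")
  case True
  hence "sm t w = (\<lambda>_. 0)" using assms(4) by (simp)
  thus ?thesis using True indep_nz[OF assms(3)] by (simp add: sm_zero_iff)
next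
  case False
  let ?r = "t/u"
  have v: "v = sm ?r w" using vadd_zero_eq[OF assms(4) False] .
  have "?r \<in> Fq" using isW_scale_Fq[of w ?r] assms(1,2) v indep_nz[OF assms(3)] by simp
  moreover have "vadd (sm 1 v) (sm ?r w) = (\<lambda>_. 0)" using v by (simp add: vadd_def sm_def xx)
  ultimately have "(1::'a) = 0" using assms(3)[unfolded indep_def, rule_format, OF Fq_1] by blast
  thus ?thesis by simp
qed

lemma conj_helper:
  fixes a b x y z x' y' z' k m :: 'a
  assumes A: "a*x + b*y = k*z" and B: "a*x' + b*y' = k*z'"
    and "x'^q = x" "y'^q = y" "z'^q = z" and m: "k^q = m*k"
  shows "(a^q + m*a)*x + (b^q + m*b)*y = 0"
proof -
  have "(a*x' + b*y')^q = (k*z')^q" using B by simp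
  hence "a^q*x + b^q*y = k^q * z" using assms(3-5) by (simp add: frob_add power_mult_distrib)
  also have "\<dots> = m*(a*x + b*y)" using m A by (simp add: mult.assoc)
  finally show ?thesis by (simp add: algebra_simps c2s)
qed

lemma conj_step: assumes "isW v" "isW w" "isW z" "indep v w" "k \<noteq> 0"
  and E: "vadd (sm a v) (sm b w) = sm k z"
  shows "\<exists>m. m \<noteq> 0 \<and> a^q = m*a \<and> b^q = m*b"
proof -
  define m where "m = k^q/k"
  have m: "k^q = m*k" "m \<noteq> 0" using assms(5) q_pos by (auto simp: m_def)
  obtain v1 v3 v4 v6 where v: "v = vec6 v1 (v1^q) v3 v4 (v4^q) v6" "v3 \<in> Fq" "v6 \<in> Fq" using assms(1) isW_E by blast
  obtain w1 w3 w4 w6 where w: "w = vec6 w1 (w1^q) w3 w4 (w4^q) w6" "w3 \<in> Fq" "w6 \<in> Fq" using assms(2) isW_E by blast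
  obtain z1 z3 z4 z6 where z: "z = vec6 z1 (z1^q) z3 z4 (z4^q) z6" "z3 \<in> Fq" "z6 \<in> Fq" using assms(3) isW_E by blast
  have E': "vec6 (a*v1+b*w1) (a*v1^q+b*w1^q) (a*v3+b*w3) (a*v4+b*w4) (a*v4^q+b*w4^q) (a*v6+b*w6)
     = vec6 (k*z1) (k*z1^q) (k*z3) (k*z4) (k*z4^q) (k*z6)"
    using E v w z by (simp add: sm_vec6 vadd_vec6)
  hence e1: "a*v1+b*w1 = k*z1" and e2: "a*v1^q+b*w1^q = k*z1^q" and e3: "a*v3+b*w3 = k*z3"
    and e4: "a*v4+b*w4 = k*z4" and e5: "a*v4^q+b*w4^q = k*z4^q" and e6: "a*v6+b*w6 = k*z6"
    by (simp_all add: vec6_eq_iff)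
  have fq: "v3^q = v3" "w3^q = w3" "z3^q = z3" "v6^q = v6" "w6^q = w6" "z6^q = z6"
    using v w z by (simp_all add: Fq_iff)
  have c1: "(a^q + m*a)*v1 + (b^q + m*b)*w1 = 0" by (rule conj_helper[OF e1 e2 _ _ _ m(1)]) simp_all
  have c2: "(a^q + m*a)*v1^q + (b^q + m*b)*w1^q = 0" by (rule conj_helper[OF e2 e1 _ _ _ m(1)]) simp_all
  have c3: "(a^q + m*a)*v3 + (b^q + m*b)*w3 = 0" by (rule conj_helper[OF e3 e3 _ _ _ m(1)]) (simp_all add: fq)
  have c4: "(a^q + m*a)*v4 + (b^q + m*b)*w4 = 0" by (rule conj_helper[OF e4 e5 _ _ _ m(1)]) simp_all
  have c5: "(a^q + m*a)*v4^q + (b^q + m*b)*w4^q = 0" by (rule conj_helper[OF e5 e4 _ _ _ m(1)]) simp_all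
  have c6: "(a^q + m*a)*v6 + (b^q + m*b)*w6 = 0" by (rule conj_helper[OF e6 e6 _ _ _ m(1)]) (simp_all add: fq)
  have "vadd (sm (a^q + m*a) v) (sm (b^q + m*b) w) = (\<lambda>_. 0)"
    unfolding v w sm_vec6 vadd_vec6 vec6_zero_iff using c1 c2 c3 c4 c5 c6 by simp
  hence "a^q + m*a = 0 \<and> b^q + m*b = 0" using Findep assms by blast
  hence "a^q = m*a \<and> b^q = m*b" by (metis eq_iff_sum0)
  thus ?thesis using m by blast
qed

definition Lset :: "(nat \<Rightarrow> 'a) \<Rightarrow> (nat \<Rightarrow> 'a) \<Rightarrow> (nat \<Rightarrow> 'a) set set" where
  "Lset v w = {pt (vadd v (sm t w)) | t. t \<in> Fq} \<union> {pt w}"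

lemma comb_eq: "(\<lambda>i. a * (c * v i) + b * (c' * w i)) = vadd (sm (a*c) v) (sm (b*c') w)"
  by (simp add: vadd_def sm_def fun_eq_iff algebra_simps)

lemma line_lemma: assumes "isW v" "isW w" "indep v w"
  shows "Sigma q \<inter> pgline (pt v) (pt w) = Lset v w"
proof (intro Set.set_eqI iffI)
  fix X :: "(nat \<Rightarrow> 'a) set"
  assume "X \<in> Sigma q \<inter> pgline (pt v) (pt w)"
  then obtain z where z: "X = pt z" "isW z" "z \<noteq> (\<lambda>_. 0)" and Xl: "X \<in> pgline (pt v) (pt w)"
    unfolding Sigma_eq by blast
  obtain u w' a b where uw: "u \<in> pt v" "w' \<in> pt w" "a \<noteq> 0 \<or> b \<noteq> 0" "X = pt (\<lambda>i. a * u i + b * w' i)"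
    using Xl unfolding pgline_def by blast
  obtain c c' where cc: "c \<noteq> 0" "u = sm c v" "c' \<noteq> 0" "w' = sm c' w" using uw(1,2) by (auto simp: pt_alt)
  define a' b' where "a' = a*c" "b' = b*c'"
  have ab': "a' \<noteq> 0 \<or> b' \<noteq> 0" using uw(3) cc by (auto simp: a'_b'_def)
  have X: "X = pt (vadd (sm a' v) (sm b' w))" using uw(4) cc comb_eq[of a c v b c' w] by (simp add: a'_b'_def sm_def)
  have "pt z = pt (vadd (sm a' v) (sm b' w))" using X z by simp
  then obtain k where k: "k \<noteq> 0" "vadd (sm a' v) (sm b' w) = sm k z" using pt_eq_iff[OF z(3)] by blast
  obtain m where m: "m \<noteq> 0" "a'^q = m*a'" "b'^q = m*b'" using conj_step[OF assms(1,2) z(2) assms(3) k] by blast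
  show "X \<in> Lset v w"
  proof (cases "a' = 0")
    case True
    hence "b' \<noteq> 0" using ab' by simp
    hence "X = pt w" using X True pt_sm by simp
    thus ?thesis by (simp add: Lset_def)
  next
    case False
    define t where "t = b'/a'"
    have t: "t \<in> Fq" using m False by (simp add: t_def Fq_iff power_divide)
    have "vadd (sm a' v) (sm b' w) = sm a' (vadd v (sm t w))" using False by (simp add: t_def vadd_def sm_def fun_eq_iff algebra_simps)
    hence "X = pt (vadd v (sm t w))" using X pt_sm False by simp
    thus ?thesis using t by (auto simp: Lset_def)
  qed
next
  fix X :: "(nat \<Rightarrow> 'a) set"
  assume "X \<in> Lset v w"
  hence "(\<exists>t\<in>Fq. X = pt (vadd v (sm t w))) \<or> X = pt w" by (auto simp: Lset_def)
  thus "X \<in> Sigma q \<inter> pgline (pt v) (pt w)"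
  proof
    assume "\<exists>t\<in>Fq. X = pt (vadd v (sm t w))"
    then obtain t where t: "t \<in> Fq" "X = pt (vadd v (sm t w))" by blast
    have "isW (vadd v (sm t w))" using isW_lin[OF assms(1,2) Fq_1 t(1)] by simp
    moreover have "vadd v (sm t w) \<noteq> (\<lambda>_. 0)" using assms(3) t(1) unfolding indep_def by (metis Fq_1 sm_1 zero_neq_one)
    ultimately have "X \<in> Sigma q" using t(2) unfolding Sigma_eq by blast
    moreover have "X \<in> pgline (pt v) (pt w)" unfolding pgline_def
      using pt_mem[of v] pt_mem[of w] t(2) by (intro CollectI bexI exI[of _ 1] exI[of _ t]) (auto simp: vadd_def sm_def)
    ultimately show ?thesis by blast
  next
    assume X: "X = pt w"
    have "X \<in> Sigma q" using X assms indep_nz unfolding Sigma_eq by blast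
    moreover have "X \<in> pgline (pt v) (pt w)" unfolding pgline_def
      using pt_mem[of v] pt_mem[of w] X by (intro CollectI bexI exI[of _ 0] exI[of _ 1]) (auto simp: vadd_def sm_def)
    ultimately show ?thesis by blast
  qed
qed

end

context gq begin

definition Lspan :: "(nat \<Rightarrow> 'a) \<Rightarrow> (nat \<Rightarrow> 'a) \<Rightarrow> (nat \<Rightarrow> 'a) set set" where
  "Lspan v w = {pt (vadd (sm s v) (sm t w)) | s t. s \<in> Fq \<and> t \<in> Fq \<and> (s \<noteq> 0 \<or> t \<noteq> 0)}"

lemma Lset_Lspan: fixes v w :: "nat \<Rightarrow> 'a" shows "Lset v w = Lspan v w"
proof (intro Set.set_eqI iffI)
  fix X assume "X \<in> Lset v w"
  then consider (a) t where "t \<in> Fq" "X = pt (vadd v (sm t w))" | (b) "X = pt w" by (auto simp: Lset_def)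
  thus "X \<in> Lspan v w"
  proof cases
    case a thus ?thesis unfolding Lspan_def by (intro CollectI exI[of _ 1] exI[of _ t]) auto
  next
    case b thus ?thesis unfolding Lspan_def by (intro CollectI exI[of _ 0] exI[of _ 1]) auto
  qed
next
  fix X assume "X \<in> Lspan v w"
  then obtain s t where st: "s \<in> Fq" "t \<in> Fq" "s \<noteq> 0 \<or> t \<noteq> 0" "X = pt (vadd (sm s v) (sm t w))"
    unfolding Lspan_def by blast
  show "X \<in> Lset v w"
  proof (cases "s = 0")
    case True
    hence "X = pt w" using st pt_sm by simp
    thus ?thesis by (simp add: Lset_def)
  next
    case False
    have "vadd (sm s v) (sm t w) = sm s (vadd v (sm (t/s) w))"
      using False by (simp add: vadd_def sm_def fun_eq_iff algebra_simps)
    hence "X = pt (vadd v (sm (t/s) w))" using st(4) pt_sm False by simp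
    moreover have "t/s \<in> Fq" using st Fq_div by blast
    ultimately show ?thesis by (auto simp: Lset_def)
  qed
qed

lemma comb_comb: "vadd (sm s (vadd (sm a1 v) (sm b1 w))) (sm t (vadd (sm a2 v) (sm b2 w)))
   = vadd (sm (s*a1+t*a2) v) (sm (s*b1+t*b2) w)"
  by (simp add: vadd_def sm_def fun_eq_iff algebra_simps)

lemma det_zero: fixes s t a1 a2 b1 b2 :: 'a
  assumes "s*a1+t*a2 = 0" "s*b1+t*b2 = 0" "a1*b2 + a2*b1 \<noteq> 0" shows "s = 0 \<and> t = 0"
proof -
  have "s*(a1*b2 + a2*b1) = b2*(s*a1+t*a2) + a2*(s*b1+t*b2)" by (simp add: algebra_simps c2s)
  hence s: "s = 0" using assms by simp
  have "t*(a1*b2 + a2*b1) = b1*(s*a1+t*a2) + a1*(s*b1+t*b2)" by (simp add: algebra_simps c2s)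
  hence "t = 0" using assms by simp
  thus ?thesis using s by simp
qed

lemma Lspan_sub: fixes v w :: "nat \<Rightarrow> 'a"
  assumes "isW v" "isW w" "indep v w" "a1 \<in> Fq" "b1 \<in> Fq" "a2 \<in> Fq" "b2 \<in> Fq" "a1*b2 + a2*b1 \<noteq> 0"
  shows "Lspan (vadd (sm a1 v) (sm b1 w)) (vadd (sm a2 v) (sm b2 w)) \<subseteq> Lspan v w"
proof
  fix X assume "X \<in> Lspan (vadd (sm a1 v) (sm b1 w)) (vadd (sm a2 v) (sm b2 w))"
  then obtain s t where st: "s \<in> Fq" "t \<in> Fq" "s \<noteq> 0 \<or> t \<noteq> 0"
    "X = pt (vadd (sm (s*a1+t*a2) v) (sm (s*b1+t*b2) w))"
    unfolding Lspan_def comb_comb by blast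
  have "s*a1+t*a2 \<noteq> 0 \<or> s*b1+t*b2 \<noteq> 0" using det_zero assms(8) st(3) by blast
  moreover have "s*a1+t*a2 \<in> Fq" "s*b1+t*b2 \<in> Fq" using st assms by (simp_all add: Fq_add Fq_mult)
  ultimately show "X \<in> Lspan v w" using st(4) unfolding Lspan_def by blast
qed

lemma base_change: fixes v w :: "nat \<Rightarrow> 'a"
  assumes "isW v" "isW w" "indep v w" "a1 \<in> Fq" "b1 \<in> Fq" "a2 \<in> Fq" "b2 \<in> Fq" "a1*b2 + a2*b1 \<noteq> 0"
  defines "v' \<equiv> vadd (sm a1 v) (sm b1 w)" and "w' \<equiv> vadd (sm a2 v) (sm b2 w)"
  shows "isW v' \<and> isW w' \<and> indep v' w' \<and> Lset v' w' = Lset v w"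
proof -
  let ?d = "a1*b2 + a2*b1"
  have W: "isW v'" "isW w'" using isW_lin assms by auto
  have I: "indep v' w'" unfolding indep_def
  proof (intro allI impI)
    fix s t assume st: "s \<in> Fq" "t \<in> Fq" "vadd (sm s v') (sm t w') = (\<lambda>_. 0)"
    hence "vadd (sm (s*a1+t*a2) v) (sm (s*b1+t*b2) w) = (\<lambda>_. 0)" unfolding v'_def w'_def comb_comb by simp
    hence "s*a1+t*a2 = 0 \<and> s*b1+t*b2 = 0" using Findep assms by blast
    thus "s = 0 \<and> t = 0" using det_zero assms(8) by blast
  qed
  have d: "?d \<in> Fq" using assms by (simp add: Fq_add Fq_mult)
  have "(b2/?d)*a1 + (b1/?d)*a2 = (b2*a1 + b1*a2)/?d" by (simp add: add_divide_distrib)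
  also have "b2*a1 + b1*a2 = ?d" by (simp add: mult.commute)
  finally have c1: "(b2/?d)*a1 + (b1/?d)*a2 = 1" using assms(8) by simp
  have c2: "(b2/?d)*b1 + (b1/?d)*b2 = 0" by (simp add: algebra_simps c2s)
  have c3: "(a2/?d)*a1 + (a1/?d)*a2 = 0" by (simp add: algebra_simps c2s)
  have "(a2/?d)*b1 + (a1/?d)*b2 = (a2*b1 + a1*b2)/?d" by (simp add: add_divide_distrib)
  also have "a2*b1 + a1*b2 = ?d" by (simp add: add.commute)
  finally have c4: "(a2/?d)*b1 + (a1/?d)*b2 = 1" using assms(8) by simp
  have vv: "v = vadd (sm (b2/?d) v') (sm (b1/?d) w')"
    unfolding v'_def w'_def comb_comb c1 c2 by simp
  have ww: "w = vadd (sm (a2/?d) v') (sm (a1/?d) w')"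
    unfolding v'_def w'_def comb_comb c3 c4 by simp
  have "(b2/?d)*(a1/?d) + (a2/?d)*(b1/?d) = (b2*a1 + a2*b1)/(?d*?d)" by (simp add: add_divide_distrib)
  also have "b2*a1 + a2*b1 = ?d" by (simp add: mult.commute)
  finally have det2: "(b2/?d)*(a1/?d) + (a2/?d)*(b1/?d) \<noteq> 0" using assms(8) by simp
  have "Lspan v' w' \<subseteq> Lspan v w" unfolding v'_def w'_def by (rule Lspan_sub[OF assms(1-8)])
  moreover have "Lspan v w \<subseteq> Lspan v' w'"
    apply (subst vv, subst ww)
    apply (rule Lspan_sub[OF W I])
    using assms d det2 by (simp_all add: Fq_div)
  ultimately show ?thesis using W I by (simp add: Lset_Lspan)
qed

lemma hform_sm: "hform q \<omega> (sm c v) (sm c' w) = c * c'^q * hform q \<omega> v w"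
  by (simp add: hform_def sm_def power_mult_distrib algebra_simps)

lemma perp_pt: "perp q \<omega> (pt v) (pt w) \<longleftrightarrow> hform q \<omega> v w = 0"
proof
  assume "perp q \<omega> (pt v) (pt w)"
  then obtain v' w' where "v' \<in> pt v" "w' \<in> pt w" "hform q \<omega> v' w' = 0" unfolding perp_def by blast
  then obtain c c' where "c \<noteq> 0" "c' \<noteq> 0" "hform q \<omega> (sm c v) (sm c' w) = 0" by (auto simp: pt_alt)
  thus "hform q \<omega> v w = 0" using q_pos by (simp add: hform_sm)
next
  assume "hform q \<omega> v w = 0"
  thus "perp q \<omega> (pt v) (pt w)" unfolding perp_def using pt_mem by blast
qed

lemma Wline_struct: assumes "W_line q \<omega> L"
  shows "\<exists>v w. isW v \<and> isW w \<and> indep v w \<and> L = Lset v w"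
proof -
  obtain P R where PR: "P \<in> Sigma q" "R \<in> Sigma q" "P \<noteq> R" "L = Sigma q \<inter> pgline P R"
    using assms unfolding W_line_def sigma_line_def by blast
  obtain v where v: "P = pt v" "isW v" "v \<noteq> (\<lambda>_. 0)" using PR(1) unfolding Sigma_eq by blast
  obtain w where w: "R = pt w" "isW w" "w \<noteq> (\<lambda>_. 0)" using PR(2) unfolding Sigma_eq by blast
  have I: "indep v w" unfolding indep_def
  proof (intro allI impI)
    fix s t assume st: "s \<in> Fq" "t \<in> Fq" "vadd (sm s v) (sm t w) = (\<lambda>_. 0)"
    show "s = 0 \<and> t = 0"
    proof (cases "s = 0")
      case True
      hence "sm t w = (\<lambda>_. 0)" using st by simp
      thus ?thesis using True w by (simp add: sm_zero_iff)
    next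
      case False
      have "v = sm (t/s) w" using vadd_zero_eq[OF st(3) False] .
      moreover have "t \<noteq> 0" using calculation v(3) by auto
      ultimately have "P = R" using v w pt_sm[of "t/s" w] False by simp
      thus ?thesis using PR by simp
    qed
  qed
  show ?thesis using PR v w I line_lemma by blast
qed

lemma Wline_perp: "W_line q \<omega> L \<Longrightarrow> X \<in> L \<Longrightarrow> Y \<in> L \<Longrightarrow> perp q \<omega> X Y"
  unfolding W_line_def by blast

lemma Lset_mem: "t \<in> Fq \<Longrightarrow> pt (vadd v (sm t w)) \<in> Lset v w" "pt w \<in> Lset v w"
  by (auto simp: Lset_def)

lemma Wline_norm: assumes "W_line q \<omega> L"
  shows "\<exists>v w. isW v \<and> isW w \<and> indep v w \<and> L = Lset v w \<and> w 6 = 0 \<and> (v 6 = 0 \<or> v 6 = 1)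
          \<and> hform q \<omega> v w = 0"
proof -
  obtain v w where vw: "isW v" "isW w" "indep v w" "L = Lset v w" using Wline_struct[OF assms] by blast
  have f: "v 6 \<in> Fq" "w 6 \<in> Fq" using vw by (auto simp: isW_def)
  have "\<exists>v' w'. isW v' \<and> isW w' \<and> indep v' w' \<and> L = Lset v' w' \<and> w' 6 = 0 \<and> (v' 6 = 0 \<or> v' 6 = 1)"
  proof (cases "w 6 = 0")
    case w0: True
    show ?thesis
    proof (cases "v 6 = 0")
      case True thus ?thesis using vw w0 by blast
    next
      case False
      have bc: "isW (vadd (sm (1/v 6) v) (sm 0 w)) \<and> isW (vadd (sm 0 v) (sm 1 w)) \<and> indep (vadd (sm (1/v 6) v) (sm 0 w)) (vadd (sm 0 v) (sm 1 w))
         \<and> Lset (vadd (sm (1/v 6) v) (sm 0 w)) (vadd (sm 0 v) (sm 1 w)) = Lset v w"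
        by (rule base_change[OF vw(1-3)]) (use f False in \<open>simp_all add: Fq_div\<close>)
      have "(vadd (sm (1/v 6) v) (sm 0 w)) 6 = 1" using False by (simp add: vadd_def sm_def)
      moreover have "(vadd (sm 0 v) (sm 1 w)) 6 = 0" using w0 by (simp add: vadd_def sm_def)
      ultimately show ?thesis using bc vw(4) by metis
    qed
  next
    case False
    have bc: "isW (vadd (sm 0 v) (sm (1/w 6) w)) \<and> isW (vadd (sm 1 v) (sm (v 6/w 6) w)) \<and> indep (vadd (sm 0 v) (sm (1/w 6) w)) (vadd (sm 1 v) (sm (v 6/w 6) w))
         \<and> Lset (vadd (sm 0 v) (sm (1/w 6) w)) (vadd (sm 1 v) (sm (v 6/w 6) w)) = Lset v w"
      by (rule base_change[OF vw(1-3)]) (use f False in \<open>simp_all add: Fq_div\<close>)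
    have "(vadd (sm 0 v) (sm (1/w 6) w)) 6 = 1" using False by (simp add: vadd_def sm_def)
    moreover have "(vadd (sm 1 v) (sm (v 6/w 6) w)) 6 = 0" using False by (simp add: vadd_def sm_def xx)
    ultimately show ?thesis using bc vw(4) by metis
  qed
  then obtain v' w' where vw': "isW v'" "isW w'" "indep v' w'" "L = Lset v' w'" "w' 6 = 0" "v' 6 = 0 \<or> v' 6 = 1" by blast
  have "perp q \<omega> (pt (vadd v' (sm 0 w'))) (pt w')"
    using Wline_perp[OF assms] Lset_mem vw'(4) by (metis Fq_0)
  hence "hform q \<omega> v' w' = 0" by (simp add: perp_pt)
  thus ?thesis using vw' by blast
qed

lemma card_Lset: fixes v w :: "nat \<Rightarrow> 'a" assumes "isW v" "isW w" "indep v w"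
  shows "card (Lset v w) = q + 1"
    and "inj_on (\<lambda>t. pt (vadd v (sm t w))) Fq"
    and "\<And>t. t \<in> Fq \<Longrightarrow> pt (vadd v (sm t w)) \<noteq> pt w"
proof -
  have nz: "\<And>t. t \<in> Fq \<Longrightarrow> vadd v (sm t w) \<noteq> (\<lambda>_. 0)"
    using assms(3) unfolding indep_def by (metis Fq_1 sm_1 zero_neq_one)
  have W: "\<And>t. t \<in> Fq \<Longrightarrow> isW (vadd v (sm t w))" using isW_lin[OF assms(1,2) Fq_1] by simp
  show inj: "inj_on (\<lambda>t. pt (vadd v (sm t w))) Fq"
  proof (rule inj_onI)
    fix t t' assume tt: "t \<in> Fq" "t' \<in> Fq" "pt (vadd v (sm t w)) = pt (vadd v (sm t' w))"
    then obtain k where k: "k \<in> Fq" "k \<noteq> 0" "vadd v (sm t' w) = sm k (vadd v (sm t w))"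
      using pt_Sigma_eq[OF W[OF tt(1)] W[OF tt(2)] nz[OF tt(1)]] by blast
    have "\<And>i. v i + t'*w i = k*(v i + t*w i)" using k(3) by (simp add: vadd_def sm_def fun_eq_iff)
    hence "\<And>i. (1+k)*v i + (t'+k*t)*w i = 0"
    proof -
      fix i assume h: "\<And>i. v i + t'*w i = k*(v i + t*w i)"
      have "(1+k)*v i + (t'+k*t)*w i = (v i + t'*w i) + k*(v i + t*w i)" by (simp add: algebra_simps)
      thus "(1+k)*v i + (t'+k*t)*w i = 0" using h[of i] xx by simp
    qed
    hence "vadd (sm (1+k) v) (sm (t'+k*t) w) = (\<lambda>_. 0)" by (simp add: vadd_def sm_def fun_eq_iff)
    hence "1 + k = 0 \<and> t' + k*t = 0" using Findep assms by blast
    hence h: "1 + k = 0" "t' + k*t = 0" by auto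
    have "k = 1" using h(1) eq_iff_sum0[of 1 k] by simp
    hence "t' + t = 0" using h(2) by simp
    thus "t = t'" using eq_iff_sum0[of t' t] by simp
  qed
  show ne: "\<And>t. t \<in> Fq \<Longrightarrow> pt (vadd v (sm t w)) \<noteq> pt w"
  proof
    fix t assume t: "t \<in> Fq" and eq: "pt (vadd v (sm t w)) = pt w"
    then obtain k where k: "k \<in> Fq" "k \<noteq> 0" "w = sm k (vadd v (sm t w))"
      using pt_Sigma_eq[OF W[OF t] assms(2) nz[OF t]] by blast
    have "\<And>i. w i = k*(v i + t*w i)" using k(3) by (simp add: vadd_def sm_def fun_eq_iff)
    hence "\<And>i. k*v i + (k*t+1)*w i = 0"
    proof -
      fix i assume h: "\<And>i. w i = k*(v i + t*w i)"
      have "k*v i + (k*t+1)*w i = k*(v i + t*w i) + w i" by (simp add: algebra_simps)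
      thus "k*v i + (k*t+1)*w i = 0" using h[of i] xx by simp
    qed
    hence "vadd (sm k v) (sm (k*t+1) w) = (\<lambda>_. 0)" by (simp add: vadd_def sm_def fun_eq_iff)
    thus False using Findep assms k by blast
  qed
  have "Lset v w = (\<lambda>t. pt (vadd v (sm t w))) ` Fq \<union> {pt w}" by (auto simp: Lset_def)
  moreover have "card ((\<lambda>t. pt (vadd v (sm t w))) ` Fq) = q" using card_image[OF inj] card_Fq by simp
  moreover have "pt w \<notin> (\<lambda>t. pt (vadd v (sm t w))) ` Fq" using ne by auto
  ultimately show "card (Lset v w) = q + 1" by simp
qed

end

context gq begin

definition NN :: 'a where "NN = \<omega>^(q+1)"

lemma NN_eq: "NN = \<omega> * \<omega>^q" by (simp add: NN_def)
lemma NN_eq2: "NN = \<omega> + \<omega>^2" by (simp add: NN_eq omq algebra_simps power2_eq_square)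
lemma NN_nz: "NN \<noteq> 0" using om_nz q_pos by (simp add: NN_eq)
lemma NN_Fq: "NN \<in> Fq" by (simp add: Fq_iff NN_eq power_mult_distrib mult.commute)
lemma tr_Fq0: "k \<in> Fq \<Longrightarrow> tr k = 0" by (simp add: tr_def Fq_iff xx)
lemma tr_om2: "tr (\<omega>^2) = 1"
proof -
  have "tr (\<omega>^2) = (\<omega> + \<omega>^q)^2" by (simp add: tr_def sq_add power_mult[symmetric] mult.commute)
  thus ?thesis by (simp add: om_tr)
qed
lemma one_omq_om: "1 + \<omega>^q + \<omega> = 0" by (simp add: omq c2s)
lemma frob_om_div: "(x/\<omega>)^q = x^q/\<omega>^q" by (simp add: power_divide)

lemma zero_iff_tr: "x = 0 \<longleftrightarrow> tr x = 0 \<and> tr (\<omega>^q * x) = 0"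
  using decomp[of x] q_pos by (auto simp: tr_def)

lemma tr_E: "s \<in> Fq \<Longrightarrow> tr (\<omega>^2*s^2 + \<omega>*s + K) = s^2 + s + tr K"
proof -
  assume s: "s \<in> Fq"
  have "tr (\<omega>^2*s^2) = s^2 * tr (\<omega>^2)" using tr_mult_Fq[of "s^2" "\<omega>^2"] s Fq_pow by (simp add: mult.commute)
  moreover have "tr (\<omega>*s) = s * tr \<omega>" using tr_mult_Fq[of s \<omega>] s by (simp add: mult.commute)
  ultimately show ?thesis by (simp add: tr_add tr_om2 tr_om)
qed

lemma tr_omq_E: "s \<in> Fq \<Longrightarrow> tr (\<omega>^q*(\<omega>^2*s^2 + \<omega>*s + K)) = NN*s^2 + tr (\<omega>^q*K)"
proof -
  assume s: "s \<in> Fq"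
  have n1: "\<omega>^q*\<omega>^2 = NN*\<omega>" unfolding NN_eq by (simp add: power2_eq_square)
  have n2: "\<omega>^q*\<omega> = NN" unfolding NN_eq by simp
  have e: "\<omega>^q*(\<omega>^2*s^2 + \<omega>*s + K) = s^2 * (NN * \<omega>) + s * NN + \<omega>^q*K"
    unfolding NN_eq by (simp add: algebra_simps power2_eq_square)
  have "tr (s^2 * (NN*\<omega>)) = s^2 * (NN * tr \<omega>)" using s Fq_pow NN_Fq by (simp add: tr_mult_Fq)
  moreover have "tr (s * NN) = 0" using s NN_Fq by (simp add: tr_Fq0 Fq_mult)
  ultimately show ?thesis unfolding e by (simp add: tr_add tr_om mult.commute)
qed

lemma omq_NN: "\<omega>^q / NN = 1/\<omega>" using om_nz q_pos by (simp add: NN_eq)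
lemma NN_om: "NN / \<omega> = \<omega>^q" using om_nz by (simp add: NN_eq)

lemma aux3: "(s::'a) = a + b \<Longrightarrow> t = b \<Longrightarrow> t + s + a = 0"
  by (simp add: add.assoc add.left_commute xx xxy)

lemma E_iff: assumes s: "s \<in> Fq"
  shows "(\<omega>^2*s^2 + \<omega>*s + K = 0) \<longleftrightarrow> (s = tr (\<omega>^q*K/\<omega>) \<and> s^2 = tr (K/\<omega>))"
proof -
  have inv: "1/NN \<in> Fq" using NN_Fq Fq_div Fq_1 by blast
  have k1: "tr (K/\<omega>) = (1/NN) * tr (\<omega>^q*K)"
  proof -
    have "\<omega>^q \<noteq> 0" using om_nz by simp
    hence "K/\<omega> = (1/NN) * (\<omega>^q*K)" unfolding NN_eq using om_nz by (simp add: field_simps)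
    thus ?thesis using tr_mult_Fq[OF inv] by simp
  qed
  have k2: "tr (\<omega>^q*K/\<omega>) = tr K + tr (K/\<omega>)"
  proof -
    have "\<omega>^q*K/\<omega> = K + K/\<omega>" using om_nz by (simp add: omq field_simps)
    thus ?thesis by (simp add: tr_add)
  qed
  show ?thesis
  proof
    assume E: "\<omega>^2*s^2 + \<omega>*s + K = 0"
    have a: "s^2 + s + tr K = 0" using tr_E[OF s, of K] E tr_Fq0[OF Fq_0] by simp
    have b: "NN*s^2 + tr (\<omega>^q*K) = 0" using tr_omq_E[OF s, of K] E tr_Fq0[OF Fq_0] by simp
    have s2: "s^2 = tr (K/\<omega>)" using b NN_nz k1 by (simp add: eq_iff_sum0[symmetric] field_simps)
    have "s = tr K + s^2" using a by (metis eq_iff_sum0 add.commute add.assoc)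
    hence "s = tr (\<omega>^q*K/\<omega>)" using s2 k2 by simp
    thus "s = tr (\<omega>^q*K/\<omega>) \<and> s^2 = tr (K/\<omega>)" using s2 by simp
  next
    assume h: "s = tr (\<omega>^q*K/\<omega>) \<and> s^2 = tr (K/\<omega>)"
    have a: "tr (\<omega>^2*s^2 + \<omega>*s + K) = 0"
      unfolding tr_E[OF s] using h k2 by (intro aux3) auto
    have b: "tr (\<omega>^q*(\<omega>^2*s^2 + \<omega>*s + K)) = 0"
    proof -
      have "NN * s^2 = tr (\<omega>^q*K)" using h[THEN conjunct2] k1 NN_nz by simp
      thus ?thesis unfolding tr_omq_E[OF s] by (simp add: xx)
    qed
    show "\<omega>^2*s^2 + \<omega>*s + K = 0" using zero_iff_tr a b by blast
  qed
qed

lemma Th_iff: "(tr (\<omega>^q*K/\<omega>))^2 + tr (K/\<omega>) = 0 \<longleftrightarrow> (\<exists>s\<in>Fq. \<omega>^2*s^2 + \<omega>*s + K = 0)"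
proof
  assume h: "(tr (\<omega>^q*K/\<omega>))^2 + tr (K/\<omega>) = 0"
  let ?s = "tr (\<omega>^q*K/\<omega>)"
  have "?s^2 = tr (K/\<omega>)" using h by (metis eq_iff_sum0)
  hence "\<omega>^2*?s^2 + \<omega>*?s + K = 0" using E_iff[OF tr_Fq] by blast
  thus "\<exists>s\<in>Fq. \<omega>^2*s^2 + \<omega>*s + K = 0" using tr_Fq by blast
next
  assume "\<exists>s\<in>Fq. \<omega>^2*s^2 + \<omega>*s + K = 0"
  then obtain s where "s \<in> Fq" "\<omega>^2*s^2 + \<omega>*s + K = 0" by blast
  hence "s = tr (\<omega>^q*K/\<omega>) \<and> s^2 = tr (K/\<omega>)" using E_iff by blast
  thus "(tr (\<omega>^q*K/\<omega>))^2 + tr (K/\<omega>) = 0" by (metis xx)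
qed

end

context gq begin

lemma sum6: "(\<Sum>j::nat=1..6. f j) = f 1 + f 2 + f 3 + f 4 + f 5 + (f 6 :: 'b::comm_monoid_add)"
  by (simp add: numeral_eq_Suc sum.atLeast_Suc_atMost add.assoc)

lemma om1: "1 + \<omega> \<noteq> 0" by (rule om1_nz)

lemma row1: "a^2*(\<gamma>/\<omega>) + c^2 + c*(a + c*(1+\<omega>))/\<omega> = (\<gamma>*a^2 + a*c + c^2)/\<omega>"
  using om_nz apply (simp add: field_simps) by (simp add: algebra_simps power2_eq_square c2s)

lemma row2: assumes hp: "p = 1 + \<omega>" shows "a'^2*(g'/p) + c'^2 + c'*(a' + c'*\<omega>)/p = (g'*a'^2 + a'*c' + c'^2)/p"
proof -
  have "p \<noteq> 0" using om1 hp by simp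
  thus ?thesis using om_nz apply (simp add: field_simps) by (simp add: hp algebra_simps power2_eq_square c2s)
qed

lemma row3: assumes hp: "p = 1 + \<omega>" shows "a*b*(g/\<omega>) + a'*b'*(g'/p) + (p*g/\<omega> + \<omega>*g'/p) + c'*d' + c*d
   + (d*(a + c*p)/\<omega> + d'*(a' + c'*\<omega>)/p + z)
  = (g*a*b + a*d + c*d + p*g)/\<omega> + (g'*a'*b' + a'*d' + c'*d' + \<omega>*g')/p + z"
proof -
  have "p \<noteq> 0" using om1 hp by simp
  thus ?thesis using om_nz apply (simp add: field_simps) by (simp add: hp algebra_simps power2_eq_square c2s)
qed

lemma row4: assumes hp: "p = 1 + \<omega>" shows "b'^2*(g'/p) + d'^2 + (d'*(b' + d'*\<omega>) + \<omega>)/p = (g'*b'^2 + b'*d' + d'^2 + \<omega>)/p"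
proof -
  have "p \<noteq> 0" using om1 hp by simp
  thus ?thesis using om_nz apply (simp add: field_simps) by (simp add: hp algebra_simps power2_eq_square c2s)
qed

lemma row5: "b^2*(\<gamma>/\<omega>) + d^2 + (d*(b + d*(1+\<omega>)) + (1+\<omega>))/\<omega> = (\<gamma>*b^2 + b*d + d^2 + (1+\<omega>))/\<omega>"
  using om_nz apply (simp add: field_simps) by (simp add: algebra_simps power2_eq_square c2s)

end

context gq begin

definition phi :: "'a \<Rightarrow> 'a \<Rightarrow> 'a \<Rightarrow> 'a \<Rightarrow> 'a" where "phi a b c d = \<gamma>*a*b + a*d + c*d"
definition X1 :: "'a \<Rightarrow> 'a \<Rightarrow> 'a" where "X1 a c = Nf a c / \<omega>"
definition X5 :: "'a \<Rightarrow> 'a \<Rightarrow> 'a" where "X5 b d = (Nf b d + \<omega>^q) / \<omega>"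
definition X3 :: "'a \<Rightarrow> 'a \<Rightarrow> 'a \<Rightarrow> 'a \<Rightarrow> 'a" where "X3 a b c d = tr ((phi a b c d + \<omega>^q*\<gamma>)/\<omega>) + 1/NN"
definition orbvec :: "'a \<Rightarrow> 'a \<Rightarrow> 'a \<Rightarrow> 'a \<Rightarrow> nat \<Rightarrow> 'a" where
  "orbvec a b c d = vec6 (X1 a c) ((X1 a c)^q) (X3 a b c d) ((X5 b d)^q) (X5 b d) 1"

lemma pow2q[simp]: "(x::'a)^(2*q) = (x^q)^2" by (simp add: power_mult[symmetric] mult.commute)
lemma omq_nz: "\<omega>^q \<noteq> 0" using om_nz by simp

lemmas frobs = frob_add power_mult_distrib power_divide

lemma MS1: "mat_app (Mrows q \<omega> a b c d) (S_gamma q \<omega> \<gamma>) 1 = X1 a c"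
  unfolding mat_app_def Mrows_def S_gamma_def sum6 X1_def Nf_def
  apply simp
  using om_nz apply (simp add: field_simps)
  by (simp add: omq algebra_simps power2_eq_square c2s)

lemma MS2: "mat_app (Mrows q \<omega> a b c d) (S_gamma q \<omega> \<gamma>) 2 = (X1 a c)^q"
  unfolding mat_app_def Mrows_def S_gamma_def sum6 X1_def Nf_def
  apply (simp add: frobs)
  using om_nz omq_nz apply (simp add: field_simps)
  by (simp add: omq algebra_simps power2_eq_square c2s)

lemma MS3: "mat_app (Mrows q \<omega> a b c d) (S_gamma q \<omega> \<gamma>) 3 = X3 a b c d"
  unfolding mat_app_def Mrows_def S_gamma_def sum6 X3_def phi_def tr_def NN_def
  apply (simp add: frobs)
  using om_nz omq_nz apply (simp add: field_simps)
  by (simp add: omq algebra_simps power2_eq_square c2s)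

lemma MS4: "mat_app (Mrows q \<omega> a b c d) (S_gamma q \<omega> \<gamma>) 4 = (X5 b d)^q"
  unfolding mat_app_def Mrows_def S_gamma_def sum6 X5_def Nf_def
  apply (simp add: frobs)
  using om_nz omq_nz apply (simp add: field_simps)
  by (simp add: omq algebra_simps power2_eq_square c2s)

lemma MS5: "mat_app (Mrows q \<omega> a b c d) (S_gamma q \<omega> \<gamma>) 5 = X5 b d"
  unfolding mat_app_def Mrows_def S_gamma_def sum6 X5_def Nf_def
  apply simp
  using om_nz apply (simp add: field_simps)
  by (simp add: omq algebra_simps power2_eq_square c2s)

lemma MS6: "mat_app (Mrows q \<omega> a b c d) (S_gamma q \<omega> \<gamma>) 6 = 1"
  unfolding mat_app_def Mrows_def S_gamma_def sum6 by simp

lemma MS: "mat_app (Mrows q \<omega> a b c d) (S_gamma q \<omega> \<gamma>) = orbvec a b c d"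
proof (rule ext)
  fix i
  show "mat_app (Mrows q \<omega> a b c d) (S_gamma q \<omega> \<gamma>) i = orbvec a b c d i"
  proof (cases "i \<in> {1..6}")
    case True
    hence "i = 1 \<or> i = 2 \<or> i = 3 \<or> i = 4 \<or> i = 5 \<or> i = 6" by auto
    thus ?thesis unfolding orbvec_def using MS1 MS2 MS3 MS4 MS5 MS6 by auto
  next
    case False thus ?thesis unfolding orbvec_def mat_app_def by (auto simp: vec6_out)
  qed
qed

end

context gq begin

definition Dd :: "'a \<Rightarrow> 'a" where "Dd \<delta> = \<delta> + 1/NN + tr (\<omega>^q*\<gamma>/\<omega>)"
definition KK :: "'a \<Rightarrow> 'a \<Rightarrow> 'a \<Rightarrow> 'a" where
  "KK \<alpha> \<delta> \<beta> = (\<omega>^2*Dd \<delta>)^2 + \<omega>^2*Dd \<delta> + (\<omega>*\<alpha>)*(\<omega>*\<beta>^q + \<omega>^q) + \<gamma>"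
definition Th :: "'a \<Rightarrow> 'a \<Rightarrow> 'a \<Rightarrow> 'a" where
  "Th \<alpha> \<delta> \<beta> = (tr (\<omega>^q*KK \<alpha> \<delta> \<beta>/\<omega>))^2 + tr (KK \<alpha> \<delta> \<beta>/\<omega>)"

lemma phi_id: "phi a b c d * (phi a b c d + (a*d+b*c)) = Nf a c * Nf b d + \<gamma>*(a*d+b*c)^2"
  unfolding phi_def Nf_def by (simp add: algebra_simps power2_eq_square c2s)

lemma NN_inv_Fq: "1/NN \<in> Fq" using NN_Fq Fq_div Fq_1 by blast

lemma Dd_Fq: "\<delta> \<in> Fq \<Longrightarrow> Dd \<delta> \<in> Fq" unfolding Dd_def using NN_inv_Fq tr_Fq Fq_add by blast

lemma Th_iff_E: "Th \<alpha> \<delta> \<beta> = 0 \<longleftrightarrow> (\<exists>s\<in>Fq. \<omega>^2*s^2 + \<omega>*s + KK \<alpha> \<delta> \<beta> = 0)"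
  unfolding Th_def by (rule Th_iff)

lemma orb_to_Th: assumes ab: "a*d+b*c = 1"
  shows "Th (X1 a c) (X3 a b c d) ((X5 b d)^q) = 0"
proof -
  define \<Phi> where "\<Phi> = phi a b c d"
  define D where "D = Dd (X3 a b c d)"
  have D: "D = tr (\<Phi>/\<omega>)"
  proof -
    have "(\<Phi> + \<omega>^q*\<gamma>)/\<omega> = \<Phi>/\<omega> + \<omega>^q*\<gamma>/\<omega>" by (simp add: add_divide_distrib)
    hence "X3 a b c d = tr (\<Phi>/\<omega>) + tr (\<omega>^q*\<gamma>/\<omega>) + 1/NN" unfolding X3_def \<Phi>_def by (simp add: tr_add)
    thus ?thesis unfolding D_def Dd_def by (simp add: algebra_simps c2s)
  qed
  have DF: "D \<in> Fq" using D tr_Fq by simp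
  define s where "s = \<Phi>/\<omega> + D*\<omega>"
  have "tr s = tr (\<Phi>/\<omega>) + D * tr \<omega>" unfolding s_def by (simp add: tr_add tr_mult_Fq[OF DF])
  hence "tr s = 0" using D tr_om by (simp add: xx)
  hence sF: "s \<in> Fq" by (simp add: tr_zero_iff)
  have A: "\<omega> * X1 a c = Nf a c" unfolding X1_def using om_nz by simp
  have C: "\<omega> * ((X5 b d)^q)^q + \<omega>^q = Nf b d" unfolding X5_def using om_nz by (simp add: c2s)
  have ws: "\<omega>*s = \<Phi> + D*\<omega>^2" unfolding s_def using om_nz by (simp add: field_simps power2_eq_square)
  have ph: "\<Phi>^2 + \<Phi> = Nf a c * Nf b d + \<gamma>" using phi_id[of a b c d] ab unfolding \<Phi>_def by (simp add: power2_eq_square algebra_simps)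
  have "\<omega>^2*s^2 + \<omega>*s + KK (X1 a c) (X3 a b c d) ((X5 b d)^q) = (\<omega>*s)^2 + \<omega>*s + (\<omega>^2*D)^2 + \<omega>^2*D + Nf a c * Nf b d + \<gamma>"
    unfolding KK_def D_def[symmetric] using A C by (simp add: power_mult_distrib add.assoc)
  also have "\<dots> = (\<Phi>^2 + \<Phi>) + (Nf a c * Nf b d + \<gamma>)" unfolding ws by (simp add: sq_add algebra_simps c2s power2_eq_square)
  also have "\<dots> = 0" unfolding ph by (rule xx)
  finally show ?thesis using Th_iff_E sF by blast
qed

lemma Th_to_orb: assumes dF: "\<delta> \<in> Fq" and Th: "Th \<alpha> \<delta> \<beta> = 0"
  shows "\<exists>a b c d. a*d+b*c = 1 \<and> orbvec a b c d = vec6 \<alpha> (\<alpha>^q) \<delta> \<beta> (\<beta>^q) 1"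
proof -
  obtain s where sF: "s \<in> Fq" and E: "\<omega>^2*s^2 + \<omega>*s + KK \<alpha> \<delta> \<beta> = 0" using Th Th_iff_E by blast
  define D where "D = Dd \<delta>"
  define A where "A = \<omega>*\<alpha>"
  define C where "C = \<omega>*\<beta>^q + \<omega>^q"
  define \<Phi> where "\<Phi> = D*\<omega>^2 + s*\<omega>"
  have ph: "\<Phi>^2 + \<Phi> = A*C + \<gamma>"
  proof -
    have "\<Phi>^2 + \<Phi> + (A*C + \<gamma>) = \<omega>^2*s^2 + \<omega>*s + KK \<alpha> \<delta> \<beta>"
      unfolding \<Phi>_def KK_def D_def[symmetric] A_def C_def by (simp add: sq_add power_mult_distrib algebra_simps)
    thus ?thesis using E by (metis eq_iff_sum0)
  qed
  have A0: "A \<noteq> 0"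
  proof
    assume "A = 0"
    hence "\<Phi>^2 + \<Phi> + \<gamma> = 0" using ph by (simp add: xx)
    thus False using gam by blast
  qed
  obtain a c where ac: "Nf a c = A" using Nf_ex[OF A0] by blast
  obtain b0 d0 where bd0: "a*d0 + b0*c = 1"
  proof (cases "a = 0")
    case True
    hence "c \<noteq> 0" using ac A0 by (auto simp: Nf_def)
    thus ?thesis using that[of 0 "1/c"] that[of "1/c" 0] True by simp
  next
    case False thus ?thesis using that[of "1/a" 0] by simp
  qed
  define lam where "lam = (\<Phi> + phi a b0 c d0)/A"
  define b where "b = b0 + lam*a"
  define d where "d = d0 + lam*c"
  have ab: "a*d + b*c = 1" unfolding b_def d_def using bd0 by (simp add: algebra_simps c2s)
  have phiE: "phi a b c d = \<Phi>"
  proof -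
    have "phi a b c d = phi a b0 c d0 + lam * Nf a c" unfolding phi_def Nf_def b_def d_def by (simp add: algebra_simps power2_eq_square)
    also have "lam * Nf a c = \<Phi> + phi a b0 c d0" unfolding lam_def ac using A0 by simp
    finally show ?thesis by (simp add: c2s)
  qed
  have NbC: "Nf b d = C"
  proof -
    have "A * Nf b d + \<gamma> = \<Phi>^2 + \<Phi>" using phi_id[of a b c d] ab phiE ac by (simp add: power2_eq_square algebra_simps)
    hence "A * Nf b d = A * C" using ph by simp
    thus ?thesis using A0 by simp
  qed
  have x1: "X1 a c = \<alpha>" unfolding X1_def ac A_def using om_nz by simp
  have x5: "X5 b d = \<beta>^q" unfolding X5_def NbC C_def using om_nz by (simp add: c2s)
  have DF: "D \<in> Fq" unfolding D_def using Dd_Fq dF by simp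
  have trP: "tr (\<Phi>/\<omega>) = D"
  proof -
    have "\<Phi>/\<omega> = D*\<omega> + s" unfolding \<Phi>_def using om_nz by (simp add: field_simps power2_eq_square)
    hence "tr (\<Phi>/\<omega>) = D * tr \<omega> + tr s" using tr_add tr_mult_Fq[OF DF] by simp
    thus ?thesis using tr_om tr_Fq0[OF sF] by simp
  qed
  have x3: "X3 a b c d = \<delta>"
  proof -
    have "(\<Phi> + \<omega>^q*\<gamma>)/\<omega> = \<Phi>/\<omega> + \<omega>^q*\<gamma>/\<omega>" by (simp add: add_divide_distrib)
    hence "X3 a b c d = D + tr (\<omega>^q*\<gamma>/\<omega>) + 1/NN" unfolding X3_def phiE by (simp add: tr_add trP)
    thus ?thesis unfolding D_def Dd_def by (simp add: algebra_simps c2s)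
  qed
  have "orbvec a b c d = vec6 \<alpha> (\<alpha>^q) \<delta> \<beta> (\<beta>^q) 1" unfolding orbvec_def x1 x5 x3 by simp
  thus ?thesis using ab by blast
qed

end

context gq begin

definition Qf :: "(nat \<Rightarrow> 'a) \<Rightarrow> 'a" where "Qf v = (v 3)^2 + v 1 * v 5 + v 2 * v 4"

lemma Qf_sm: "Qf (sm c v) = c^2 * Qf v" by (simp add: Qf_def sm_def algebra_simps power2_eq_square)

lemma Qset_mem: assumes "isW v" "v \<noteq> (\<lambda>_. 0)"
  shows "pt v \<in> Qset q \<longleftrightarrow> v 6 = 0 \<and> Qf v = 0"
proof -
  have S: "pt v \<in> Sigma q" using assms unfolding Sigma_eq by blast
  have "pt v \<in> Qset q \<longleftrightarrow> (\<exists>u\<in>pt v. u 6 = 0 \<and> Qf u = 0)" using S unfolding Qset_def Qf_def by blast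
  also have "\<dots> \<longleftrightarrow> (\<exists>c. c \<noteq> 0 \<and> (sm c v) 6 = 0 \<and> Qf (sm c v) = 0)" unfolding pt_alt by blast
  also have "\<dots> \<longleftrightarrow> (\<exists>c. c \<noteq> 0 \<and> c * v 6 = 0 \<and> c^2 * Qf v = 0)" unfolding Qf_sm by (simp add: sm_def)
  also have "\<dots> \<longleftrightarrow> v 6 = 0 \<and> Qf v = 0" by (auto intro: exI[of _ 1])
  finally show ?thesis .
qed

lemma orbit_mem: assumes W: "isW v" and nz: "v \<noteq> (\<lambda>_. 0)"
  shows "pt v \<in> orbit_S q \<omega> \<gamma> \<longleftrightarrow> v 6 \<noteq> 0 \<and> Th (v 1/v 6) (v 3/v 6) (v 4/v 6) = 0"
proof -
  obtain a0 d0 b0 f0 where v: "v = vec6 a0 (a0^q) d0 b0 (b0^q) f0" "d0 \<in> Fq" "f0 \<in> Fq" using W isW_E by blast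
  have vals: "v 1 = a0" "v 3 = d0" "v 4 = b0" "v 6 = f0" using v by simp_all
  have orb: "orbit_S q \<omega> \<gamma> = {pt (orbvec a b c d) | a b c d. a*d+b*c = 1}"
    unfolding orbit_S_def MS ..
  show ?thesis
  proof
    assume "pt v \<in> orbit_S q \<omega> \<gamma>"
    then obtain a b c d where abcd: "a*d+b*c = 1" "pt v = pt (orbvec a b c d)" unfolding orb by blast
    obtain k where k: "k \<noteq> 0" "orbvec a b c d = sm k v" using pt_eq_iff[OF nz] abcd(2) by blast
    have e: "vec6 (X1 a c) ((X1 a c)^q) (X3 a b c d) ((X5 b d)^q) (X5 b d) 1
        = vec6 (k*a0) (k*a0^q) (k*d0) (k*b0) (k*b0^q) (k*f0)"
      using k(2) unfolding orbvec_def v(1) sm_vec6 .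
    have "X1 a c = k*a0 \<and> (X1 a c)^q = k*a0^q \<and> X3 a b c d = k*d0 \<and> (X5 b d)^q = k*b0 \<and> X5 b d = k*b0^q \<and> 1 = k*f0"
      using e[unfolded vec6_eq_iff] by blast
    hence e1: "X1 a c = k*a0" and e3: "X3 a b c d = k*d0" and e4: "(X5 b d)^q = k*b0" and e6: "1 = k*f0"
      by blast+
    have f0: "f0 \<noteq> 0" using e6 by auto
    have kk: "k = 1/f0" using e6 f0 by (simp add: field_simps)
    have "Th (X1 a c) (X3 a b c d) ((X5 b d)^q) = 0" using orb_to_Th[OF abcd(1)] .
    hence "Th (a0/f0) (d0/f0) (b0/f0) = 0" using e1 e3 e4 kk by simp
    thus "v 6 \<noteq> 0 \<and> Th (v 1/v 6) (v 3/v 6) (v 4/v 6) = 0" using vals f0 by simp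
  next
    assume h: "v 6 \<noteq> 0 \<and> Th (v 1/v 6) (v 3/v 6) (v 4/v 6) = 0"
    have f0: "f0 \<noteq> 0" using h vals by simp
    have dF: "d0/f0 \<in> Fq" using v Fq_div by blast
    obtain a b c d where abcd: "a*d+b*c = 1" "orbvec a b c d = vec6 (a0/f0) ((a0/f0)^q) (d0/f0) (b0/f0) ((b0/f0)^q) 1"
      using Th_to_orb[OF dF, of "a0/f0" "b0/f0"] h vals by auto
    have fq: "f0^q = f0" using v(3) Fq_iff by simp
    have "orbvec a b c d = sm (1/f0) v" unfolding abcd(2) v(1) sm_vec6 using f0 fq
      by (simp add: vec6_eq_iff power_divide)
    moreover have "1/f0 \<noteq> 0" using f0 by simp
    ultimately have "pt (orbvec a b c d) = pt v" using pt_sm[of "1/f0" v] by metis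
    thus "pt v \<in> orbit_S q \<omega> \<gamma>" unfolding orb using abcd(1) by blast
  qed
qed

lemma Oset_mem: assumes "isW v" "v \<noteq> (\<lambda>_. 0)"
  shows "pt v \<in> Oset q \<omega> \<gamma> \<longleftrightarrow> (v 6 = 0 \<and> Qf v = 0) \<or> (v 6 \<noteq> 0 \<and> Th (v 1/v 6) (v 3/v 6) (v 4/v 6) = 0)"
  unfolding Oset_def using Qset_mem[OF assms] orbit_mem[OF assms] by blast

end

context gq begin

lemma quad_roots: fixes a b c :: 'a assumes "c \<noteq> 0"
  shows "card {t. c*t^2 + b*t + a = 0} \<le> 2"
proof -
  let ?p = "[:a, b, c:]"
  have "?p \<noteq> 0" using assms by simp
  hence "card {t. poly ?p t = 0} \<le> degree ?p" by (rule card_poly_roots_bound)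
  moreover have "degree ?p = 2" using assms by simp
  moreover have "{t. poly ?p t = 0} = {t. c*t^2 + b*t + a = 0}" by (auto simp: algebra_simps power2_eq_square)
  ultimately show ?thesis by simp
qed

lemma lin_roots: fixes a b :: 'a assumes "b \<noteq> 0"
  shows "card {t. b*t + a = 0} \<le> 1"
proof -
  have "{t. b*t + a = 0} \<subseteq> {-a/b}"
  proof
    fix t assume "t \<in> {t. b*t + a = 0}"
    hence "b*t = -a" by (simp add: eq_neg_iff_add_eq_0)
    thus "t \<in> {-a/b}" using assms by (simp add: field_simps)
  qed
  hence "card {t. b*t + a = 0} \<le> card {-a/b}" by (intro card_mono) auto
  thus ?thesis by simp
qed

lemma count_quad: fixes a b c :: 'a
  assumes P0: "P0 \<longleftrightarrow> c = 0" and P: "\<And>t. t \<in> Fq \<Longrightarrow> P t \<longleftrightarrow> c*t^2 + b*t + a = 0"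
  shows "(if P0 then 1 else 0) + card {t\<in>Fq. P t} \<in> {0,1,2,q+1}"
    and "(if P0 then 1 else 0) + card {t\<in>Fq. P t} = q+1 \<Longrightarrow> c = 0 \<and> b = 0 \<and> a = 0"
proof -
  let ?S = "{t\<in>Fq. P t}"
  let ?n = "(if P0 then 1 else 0) + card ?S"
  have q3: "q + 1 \<ge> 3" using q_pos by simp
  have sub: "?S \<subseteq> {t. c*t^2 + b*t + a = 0}" using P by auto
  have fin: "finite {t::'a. c*t^2 + b*t + a = 0}" by simp
  have "?n \<in> {0,1,2,q+1} \<and> (?n = q+1 \<longrightarrow> c = 0 \<and> b = 0 \<and> a = 0)"
  proof (cases "c = 0")
    case False
    have "card ?S \<le> 2" using card_mono[OF fin sub] quad_roots[OF False, of b a] by simp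
    hence "?n \<le> 2" using P0 False by simp
    hence "?n = 0 \<or> ?n = 1 \<or> ?n = 2" "?n \<noteq> q+1" using q3 by linarith+
    thus ?thesis by blast
  next
    case c0: True
    show ?thesis
    proof (cases "b = 0")
      case False
      have sub': "?S \<subseteq> {t. b*t + a = 0}" using P c0 by auto
      have "card ?S \<le> 1" using card_mono[OF _ sub'] lin_roots[OF False, of a] by simp
      hence "?n \<le> 2" "?n \<ge> 1" using P0 c0 by auto
      hence "?n = 1 \<or> ?n = 2" "?n \<noteq> q+1" using q3 by linarith+
      thus ?thesis by blast
    next
      case b0: True
      show ?thesis
      proof (cases "a = 0")
        case False
        hence "?S = {}" using P c0 b0 by auto
        hence "?n = 1" using P0 c0 by simp
        thus ?thesis using q3 by auto
      next
        case True
        hence "?S = Fq" using P c0 b0 by auto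
        thus ?thesis using P0 c0 b0 True card_Fq by simp
      qed
    qed
  qed
  thus "?n \<in> {0,1,2,q+1}" and "?n = q+1 \<Longrightarrow> c = 0 \<and> b = 0 \<and> a = 0" by auto
qed

lemma card_Lset_Int: fixes v w :: "nat \<Rightarrow> 'a" assumes "isW v" "isW w" "indep v w"
  shows "card (Lset v w \<inter> Os) = (if pt w \<in> Os then 1 else 0) + card {t\<in>Fq. pt (vadd v (sm t w)) \<in> Os}"
proof -
  let ?f = "\<lambda>t. pt (vadd v (sm t w))"
  have inj: "inj_on ?f Fq" and ne: "\<And>t. t \<in> Fq \<Longrightarrow> ?f t \<noteq> pt w" using card_Lset[OF assms] by auto
  have eq: "Lset v w \<inter> Os = ?f ` {t\<in>Fq. ?f t \<in> Os} \<union> (if pt w \<in> Os then {pt w} else {})"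
    by (auto simp: Lset_def)
  have ci: "card (?f ` {t\<in>Fq. ?f t \<in> Os}) = card {t\<in>Fq. ?f t \<in> Os}"
    by (rule card_image) (rule inj_on_subset[OF inj], auto)
  have d: "pt w \<notin> ?f ` {t\<in>Fq. ?f t \<in> Os}" using ne by auto
  show ?thesis unfolding eq using ci d by (auto simp: card_insert_if)
qed

end

context gq begin

definition c1 :: "'a \<Rightarrow> 'a \<Rightarrow> 'a \<Rightarrow> 'a \<Rightarrow> 'a \<Rightarrow> 'a" where
  "c1 \<alpha> \<beta> a b \<epsilon> = \<omega>^2*\<epsilon> + \<omega>^2*\<alpha>*b^q + \<omega>*a*(\<omega>*\<beta>^q + \<omega>^q)"
definition c2 :: "'a \<Rightarrow> 'a \<Rightarrow> 'a \<Rightarrow> 'a" where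
  "c2 a b \<epsilon> = (\<omega>^2*\<epsilon>)^2 + \<omega>^2*a*b^q"

lemma Dd_add: "Dd (\<delta> + x) = Dd \<delta> + x" by (simp add: Dd_def algebra_simps)

lemma KK_line: assumes t: "t \<in> Fq"
  shows "KK (\<alpha> + t*a) (\<delta> + t*\<epsilon>) (\<beta> + t*b) = KK \<alpha> \<delta> \<beta> + t * c1 \<alpha> \<beta> a b \<epsilon> + t^2 * c2 a b \<epsilon>"
proof -
  have bq: "(\<beta> + t*b)^q = \<beta>^q + t*b^q" using t by (simp add: frob_add power_mult_distrib Fq_iff)
  show ?thesis unfolding KK_def Dd_add bq c1_def c2_def
    by (simp add: algebra_simps power2_eq_square c2s)
qed

lemma tr_sq: "(tr x)^2 = tr (x^2)" by (simp add: tr_def sq_add power_mult[symmetric] mult.commute)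

lemma tr_lin2: assumes "t \<in> Fq" shows "tr (x + t*y + t^2*z) = tr x + t * tr y + t^2 * tr z"
  using assms by (simp add: tr_add tr_mult_Fq Fq_pow)

lemma Th_line: fixes \<alpha> \<delta> \<beta> a b \<epsilon> t :: 'a assumes t: "t \<in> Fq"
  defines "K0 \<equiv> KK \<alpha> \<delta> \<beta>" and "C1 \<equiv> c1 \<alpha> \<beta> a b \<epsilon>" and "C2 \<equiv> c2 a b \<epsilon>"
  shows "Th (\<alpha> + t*a) (\<delta> + t*\<epsilon>) (\<beta> + t*b) =
     ((tr (\<omega>^q*K0/\<omega>))^2 + tr (K0/\<omega>)) + t * tr (C1/\<omega>) + t^2 * ((tr (\<omega>^q*C1/\<omega>))^2 + tr (C2/\<omega>))
      + (t^2)^2 * (tr (\<omega>^q*C2/\<omega>))^2"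
proof -
  have K: "KK (\<alpha> + t*a) (\<delta> + t*\<epsilon>) (\<beta> + t*b) = K0 + t*C1 + t^2*C2" using KK_line[OF t] by (simp add: K0_def C1_def C2_def)
  have e1: "\<omega>^q*(K0 + t*C1 + t^2*C2)/\<omega> = \<omega>^q*K0/\<omega> + t*(\<omega>^q*C1/\<omega>) + t^2*(\<omega>^q*C2/\<omega>)"
    by (simp add: algebra_simps add_divide_distrib)
  have e2: "(K0 + t*C1 + t^2*C2)/\<omega> = K0/\<omega> + t*(C1/\<omega>) + t^2*(C2/\<omega>)"
    by (simp add: algebra_simps add_divide_distrib)
  show ?thesis unfolding Th_def K e1 e2 tr_lin2[OF t]
    by (simp add: sq_add power_mult_distrib algebra_simps power2_eq_square c2s)
qed

lemma B1_eq: assumes "\<epsilon> \<in> Fq"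
  shows "tr (c1 \<alpha> \<beta> a b \<epsilon> / \<omega>) = hform q \<omega> (vec6 \<alpha> (\<alpha>^q) \<delta> \<beta> (\<beta>^q) 1) (vec6 a (a^q) \<epsilon> b (b^q) 0)"
proof -
  have e: "c1 \<alpha> \<beta> a b \<epsilon> / \<omega> = \<omega>*\<epsilon> + \<omega>*\<alpha>*b^q + a*(\<omega>*\<beta>^q + \<omega>^q)"
    unfolding c1_def using om_nz by (simp add: field_simps power2_eq_square)
  have eq: "\<epsilon>^q = \<epsilon>" using assms Fq_iff by simp
  show ?thesis unfolding e tr_def hform_def
    using eq q_pos by (simp add: frobs omq algebra_simps c2s zero_power)
qed

lemma A2_eq: assumes "\<epsilon> \<in> Fq"
  shows "tr (\<omega>^q * c2 a b \<epsilon> / \<omega>) = NN * Qf (vec6 a (a^q) \<epsilon> b (b^q) 0)"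
proof -
  have e: "\<omega>^q * c2 a b \<epsilon> / \<omega> = (NN*\<epsilon>^2) * \<omega>^2 + NN * (a*b^q)"
    unfolding c2_def NN_eq using om_nz by (simp add: field_simps power2_eq_square)
  have f: "NN*\<epsilon>^2 \<in> Fq" using assms NN_Fq Fq_mult Fq_pow by blast
  have "tr (\<omega>^q * c2 a b \<epsilon> / \<omega>) = NN*\<epsilon>^2 * tr (\<omega>^2) + NN * tr (a*b^q)"
    unfolding e by (simp add: tr_add tr_mult_Fq[OF f] tr_mult_Fq[OF NN_Fq])
  also have "\<dots> = NN*\<epsilon>^2 + NN * (a*b^q + a^q*b)" unfolding tr_om2 by (simp add: tr_def power_mult_distrib)
  finally show ?thesis unfolding Qf_def by (simp add: algebra_simps)
qed

end

context gq begin

lemma sq_zero_iff: "((x::'a)^2 = 0) = (x = 0)" by simp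

lemma caseb: fixes \<alpha> \<delta> \<beta> a b \<epsilon> :: 'a
  assumes eF: "\<epsilon> \<in> Fq" and h: "hform q \<omega> (vec6 \<alpha> (\<alpha>^q) \<delta> \<beta> (\<beta>^q) 1) (vec6 a (a^q) \<epsilon> b (b^q) 0) = 0"
  obtains \<rho> \<kappa> where "\<And>t. t \<in> Fq \<Longrightarrow> Th (\<alpha>+t*a) (\<delta>+t*\<epsilon>) (\<beta>+t*b) = 0 \<longleftrightarrow>
        (NN * Qf (vec6 a (a^q) \<epsilon> b (b^q) 0))*t^2 + \<rho>*t + \<kappa> = 0"
    and "\<kappa> = 0 \<longleftrightarrow> Th \<alpha> \<delta> \<beta> = 0"
    and "\<rho>^2 = (tr (\<omega>^q*c1 \<alpha> \<beta> a b \<epsilon>/\<omega>))^2 + tr (c2 a b \<epsilon>/\<omega>)"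
proof -
  obtain \<rho> where r: "\<rho>^2 = (tr (\<omega>^q*c1 \<alpha> \<beta> a b \<epsilon>/\<omega>))^2 + tr (c2 a b \<epsilon>/\<omega>)" using sqrt_ex by blast
  obtain \<kappa> where k: "\<kappa>^2 = Th \<alpha> \<delta> \<beta>" using sqrt_ex by blast
  define A2 where "A2 = NN * Qf (vec6 a (a^q) \<epsilon> b (b^q) 0)"
  have A2: "tr (\<omega>^q * c2 a b \<epsilon> / \<omega>) = A2" unfolding A2_def by (rule A2_eq[OF eF])
  have B1: "tr (c1 \<alpha> \<beta> a b \<epsilon> / \<omega>) = 0" using B1_eq[OF eF] h by simp
  have main: "\<And>t. t \<in> Fq \<Longrightarrow> Th (\<alpha>+t*a) (\<delta>+t*\<epsilon>) (\<beta>+t*b) = (A2*t^2 + \<rho>*t + \<kappa>)^2"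
  proof -
    fix t :: 'a assume t: "t \<in> Fq"
    have "Th (\<alpha>+t*a) (\<delta>+t*\<epsilon>) (\<beta>+t*b) = \<kappa>^2 + t^2 * \<rho>^2 + (t^2)^2 * A2^2"
      unfolding Th_line[OF t] B1 A2 Th_def[of \<alpha> \<delta> \<beta>, symmetric] r[symmetric] k[symmetric] by simp
    also have "\<dots> = (A2*t^2 + \<rho>*t + \<kappa>)^2" by (simp add: sq_add power_mult_distrib algebra_simps)
    finally show "Th (\<alpha>+t*a) (\<delta>+t*\<epsilon>) (\<beta>+t*b) = (A2*t^2 + \<rho>*t + \<kappa>)^2" .
  qed
  show ?thesis
  proof (rule that[of \<rho> \<kappa>])
    fix t :: 'a assume "t \<in> Fq"
    thus "Th (\<alpha>+t*a) (\<delta>+t*\<epsilon>) (\<beta>+t*b) = 0 \<longleftrightarrow> (NN * Qf (vec6 a (a^q) \<epsilon> b (b^q) 0))*t^2 + \<rho>*t + \<kappa> = 0"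
      using main A2_def by simp
  next
    show "\<kappa> = 0 \<longleftrightarrow> Th \<alpha> \<delta> \<beta> = 0" using k by (metis sq_zero_iff)
  next
    show "\<rho>^2 = (tr (\<omega>^q*c1 \<alpha> \<beta> a b \<epsilon>/\<omega>))^2 + tr (c2 a b \<epsilon>/\<omega>)" by (rule r)
  qed
qed

lemma Th_Phi: assumes "Th \<alpha> \<delta> \<beta> = 0" shows "\<exists>\<Phi>. \<Phi>^2 + \<Phi> = (\<omega>*\<alpha>)*(\<omega>*\<beta>^q + \<omega>^q) + \<gamma>"
proof -
  obtain s where sF: "s \<in> Fq" and E: "\<omega>^2*s^2 + \<omega>*s + KK \<alpha> \<delta> \<beta> = 0" using assms Th_iff_E by blast
  define \<Phi> where "\<Phi> = Dd \<delta>*\<omega>^2 + s*\<omega>"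
  have "\<Phi>^2 + \<Phi> + ((\<omega>*\<alpha>)*(\<omega>*\<beta>^q + \<omega>^q) + \<gamma>) = \<omega>^2*s^2 + \<omega>*s + KK \<alpha> \<delta> \<beta>"
    unfolding \<Phi>_def KK_def by (simp add: sq_add power_mult_distrib algebra_simps)
  thus ?thesis using E by (metis eq_iff_sum0)
qed

lemma tr_om3: "tr (\<omega>^3) = 1 + NN"
proof -
  have "tr (\<omega>^3) = \<omega>^3 + (1+\<omega>)^3" unfolding tr_def by (simp add: power_mult[symmetric] mult.commute power_mult omq)
  thus ?thesis unfolding NN_eq2 by (simp add: algebra_simps power2_eq_square power3_eq_cube c2s)
qed

end

context gq begin

lemma Y_c1: "c1 \<alpha> \<beta> a b \<epsilon> = \<omega>*(\<omega>*\<epsilon> + (\<omega>*(\<alpha>*b^q + a*\<beta>^q) + \<omega>^q*a))"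
  unfolding c1_def by (simp add: algebra_simps power2_eq_square)

lemma excl: fixes \<alpha> \<delta> \<beta> a b \<epsilon> :: 'a
  assumes eF: "\<epsilon> \<in> Fq"
    and h: "hform q \<omega> (vec6 \<alpha> (\<alpha>^q) \<delta> \<beta> (\<beta>^q) 1) (vec6 a (a^q) \<epsilon> b (b^q) 0) = 0"
    and Qw: "Qf (vec6 a (a^q) \<epsilon> b (b^q) 0) = 0"
    and rho: "(tr (\<omega>^q*c1 \<alpha> \<beta> a b \<epsilon>/\<omega>))^2 + tr (c2 a b \<epsilon>/\<omega>) = 0"
    and Th: "Th \<alpha> \<delta> \<beta> = 0"
    and nz: "a \<noteq> 0 \<or> \<epsilon> \<noteq> 0 \<or> b \<noteq> 0"
  shows False
proof -
  define Y where "Y = \<omega>*(\<alpha>*b^q + a*\<beta>^q) + \<omega>^q*a"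
  define m where "m = a*b^q"
  define A where "A = \<omega>*\<alpha>"
  define C where "C = \<omega>*\<beta>^q + \<omega>^q"
  have c1Y: "c1 \<alpha> \<beta> a b \<epsilon> / \<omega> = \<omega>*\<epsilon> + Y" unfolding Y_c1 Y_def using om_nz by simp
  have "hform q \<omega> (vec6 \<alpha> (\<alpha>^q) \<delta> \<beta> (\<beta>^q) 1) (vec6 a (a^q) \<epsilon> b (b^q) 0) = \<epsilon> * tr \<omega> + tr Y"
  proof -
    have "tr (\<omega>*\<epsilon>) = \<epsilon> * tr \<omega>" using tr_mult_Fq[OF eF, of \<omega>] by (simp add: mult.commute)
    thus ?thesis using B1_eq[OF eF, of \<alpha> \<beta> a b \<delta>] unfolding c1Y by (simp add: tr_add)
  qed
  hence h1: "\<epsilon> = tr Y" using h tr_om by (metis eq_iff_sum0 mult_1_right)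
  have "Qf (vec6 a (a^q) \<epsilon> b (b^q) 0) = \<epsilon>^2 + tr m" unfolding Qf_def m_def tr_def by (simp add: power_mult_distrib algebra_simps)
  hence h2: "\<epsilon>^2 = tr m" using Qw by (metis eq_iff_sum0)
  have A1: "tr (\<omega>^q*c1 \<alpha> \<beta> a b \<epsilon>/\<omega>) = tr (\<omega>^q*Y)"
  proof -
    have "\<omega>^q*c1 \<alpha> \<beta> a b \<epsilon>/\<omega> = NN*\<epsilon> + \<omega>^q*Y" using c1Y unfolding NN_eq
      by (metis (no_types, lifting) distrib_left mult.assoc mult.commute times_divide_eq_right)
    moreover have "tr (NN*\<epsilon>) = 0" using NN_Fq eF Fq_mult tr_Fq0 by blast
    ultimately show ?thesis by (simp add: tr_add)
  qed
  have B2: "tr (c2 a b \<epsilon>/\<omega>) = \<epsilon>^2 * (1 + NN) + tr (\<omega>*m)"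
  proof -
    have "c2 a b \<epsilon>/\<omega> = \<epsilon>^2 * \<omega>^3 + \<omega>*m" unfolding c2_def m_def using om_nz
      by (simp add: field_simps power2_eq_square power3_eq_cube)
    moreover have "\<epsilon>^2 \<in> Fq" using eF Fq_pow by blast
    ultimately show ?thesis by (simp add: tr_add tr_mult_Fq tr_om3)
  qed
  have sq1: "(tr (\<omega>^q*Y))^2 = tr ((\<omega>^q)^2 * Y^2)" by (simp add: tr_sq power_mult_distrib)
  have sq2: "\<epsilon>^2 = tr (Y^2)" using h1 by (simp add: tr_sq)
  have NF: "1 + NN \<in> Fq" using NN_Fq Fq_add Fq_1 by blast
  have om_id: "(\<omega>^q)^2 + (1 + NN) = \<omega>" unfolding NN_eq2 omq by (simp add: algebra_simps power2_eq_square c2s)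
  have "0 = tr ((\<omega>^q)^2 * Y^2) + (1 + NN) * tr (Y^2) + tr (\<omega>*m)" using rho unfolding A1 B2 sq1 sq2
    by (simp add: algebra_simps)
  also have "\<dots> = tr ((\<omega>^q)^2 * Y^2) + tr ((1 + NN) * Y^2) + tr (\<omega>*m)" using tr_mult_Fq[OF NF, of "Y^2"] by simp
  also have "\<dots> = tr (((\<omega>^q)^2 + (1 + NN)) * Y^2 + \<omega>*m)" by (simp only: tr_add distrib_right)
  also have "\<dots> = tr (\<omega> * (Y^2 + m))" unfolding om_id by (simp add: algebra_simps)
  finally have t0: "tr (\<omega> * (Y^2 + m)) = 0" by simp
  have "tr (Y^2 + m) = 0" using sq2 h2 by (simp add: tr_add xx)
  hence dF: "Y^2 + m \<in> Fq" by (simp add: tr_zero_iff)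
  have "tr (\<omega> * (Y^2 + m)) = Y^2 + m" using tr_mult_Fq[OF dF, of \<omega>] tr_om by (simp add: mult.commute)
  hence mY: "m = Y^2" using t0 by (metis eq_iff_sum0)
  have YAC: "Y = A*b^q + a*C" unfolding Y_def A_def C_def by (simp add: algebra_simps)
  have ACPsi: "A*C \<in> range Psi"
  proof (cases "b = 0")
    case True
    hence "m = 0" "Y = a*C" using YAC q_pos unfolding m_def by auto
    hence "a*C = 0" using mY by simp
    hence "a = 0 \<or> C = 0" by simp
    thus ?thesis
    proof
      assume a0: "a = 0"
      hence "Y = 0" using \<open>Y = a*C\<close> by simp
      hence "\<epsilon> = 0" using h1 tr_Fq0[OF Fq_0] by simp
      thus ?thesis using a0 True nz by simp
    next
      assume "C = 0"
      hence "A*C = Psi 0" by (simp add: Psi_def)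
      thus ?thesis by blast
    qed
  next
    case False
    define B where "B = b^q"
    have B0: "B \<noteq> 0" using False by (simp add: B_def)
    define r where "r = a/B"
    have ar: "a = r*B" using B0 by (simp add: r_def)
    define w0 where "w0 = A + r*C"
    have "m = r*B^2" unfolding m_def B_def[symmetric] ar by (simp add: power2_eq_square)
    moreover have "Y = B*w0" unfolding YAC B_def[symmetric] ar w0_def by (simp add: algebra_simps)
    ultimately have "r*B^2 = (B*w0)^2" using mY by metis
    also have "\<dots> = B^2*w0^2" by (simp add: power_mult_distrib)
    finally have "r*B^2 = B^2*w0^2" .
    hence rw: "r = w0^2" using B0 by simp
    have "w0 = A + r*C" by (simp add: w0_def)
    hence hw: "w0 = A + w0^2*C" using rw by simp
    have "C*w0^2 + w0 + A = w0 + (A + w0^2*C)" by (simp add: algebra_simps)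
    also have "\<dots> = 0" using hw xx by metis
    finally have e: "C*w0^2 + w0 = A" by (metis eq_iff_sum0)
    have "Psi (C*w0) = C*(C*w0^2 + w0)" by (simp add: Psi_def power2_eq_square algebra_simps)
    hence "Psi (C*w0) = A*C" using e by (simp add: mult.commute)
    thus ?thesis by (metis rangeI)
  qed
  then obtain x where x: "Psi x = A*C" by auto
  obtain \<Phi> where ph: "\<Phi>^2 + \<Phi> = A*C + \<gamma>" using Th_Phi[OF Th] unfolding A_def C_def by blast
  have "Psi (\<Phi> + x) = \<gamma>" using ph x unfolding Psi_add by (simp add: Psi_def algebra_simps c2s)
  thus False using gam_notPsi by blast
qed

end

context gq begin

lemma para_line:
  fixes Z :: "'a \<Rightarrow> nat \<Rightarrow> 'a"
  assumes lin: "\<And>s r. s \<in> Fq \<Longrightarrow> r \<in> Fq \<Longrightarrow> Z (s + r*\<omega>) = vadd (sm s (Z 1)) (sm r (Z \<omega>))"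
    and W: "\<And>l. isW (Z l)" and nz: "\<And>l. l \<noteq> 0 \<Longrightarrow> Z l \<noteq> (\<lambda>_. 0)"
    and hz: "\<And>l l'. hform q \<omega> (Z l) (Z l') = 0"
  shows "W_line q \<omega> {pt (Z l) | l. l \<noteq> 0}" and "indep (Z 1) (Z \<omega>)"
    and "{pt (Z l) | l. l \<noteq> 0} = Lset (Z 1) (Z \<omega>)"
proof -
  show I: "indep (Z 1) (Z \<omega>)" unfolding indep_def
  proof (intro allI impI)
    fix s r assume sr: "s \<in> Fq" "r \<in> Fq" "vadd (sm s (Z 1)) (sm r (Z \<omega>)) = (\<lambda>_. 0)"
    hence "Z (s + r*\<omega>) = (\<lambda>_. 0)" using lin by simp
    hence "s + r*\<omega> = 0" using nz by blast
    thus "s = 0 \<and> r = 0" using Fq_om_indep sr by blast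
  qed
  show eq: "{pt (Z l) | l. l \<noteq> 0} = Lset (Z 1) (Z \<omega>)"
    unfolding Lset_Lspan
  proof (intro Set.set_eqI iffI)
    fix X assume "X \<in> {pt (Z l) | l. l \<noteq> 0}"
    then obtain l where l: "l \<noteq> 0" "X = pt (Z l)" by blast
    define s r where "s = tr (\<omega>^q * l)" and "r = tr l"
    have sr: "s \<in> Fq" "r \<in> Fq" unfolding s_def r_def by (simp_all add: tr_Fq)
    have "l = s + r*\<omega>" unfolding s_def r_def by (rule decomp)
    hence "X = pt (vadd (sm s (Z 1)) (sm r (Z \<omega>)))" using l lin sr by simp
    moreover have "s \<noteq> 0 \<or> r \<noteq> 0" using \<open>l = s + r*\<omega>\<close> l by auto
    ultimately show "X \<in> Lspan (Z 1) (Z \<omega>)" unfolding Lspan_def using sr by blast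
  next
    fix X assume "X \<in> Lspan (Z 1) (Z \<omega>)"
    then obtain s r where sr: "s \<in> Fq" "r \<in> Fq" "s \<noteq> 0 \<or> r \<noteq> 0" "X = pt (vadd (sm s (Z 1)) (sm r (Z \<omega>)))"
      unfolding Lspan_def by blast
    have "X = pt (Z (s + r*\<omega>))" using sr lin by simp
    moreover have "s + r*\<omega> \<noteq> 0" using Fq_om_indep sr by blast
    ultimately show "X \<in> {pt (Z l) | l. l \<noteq> 0}" by blast
  qed
  show "W_line q \<omega> {pt (Z l) | l. l \<noteq> 0}"
    unfolding W_line_def sigma_line_def
  proof (intro conjI ballI)
    have P: "pt (Z 1) \<in> Sigma q" "pt (Z \<omega>) \<in> Sigma q" using W nz om_nz unfolding Sigma_eq by auto
    have ne: "pt (Z 1) \<noteq> pt (Z \<omega>)"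
    proof
      assume "pt (Z 1) = pt (Z \<omega>)"
      then obtain k where "k \<in> Fq" "k \<noteq> 0" "Z \<omega> = sm k (Z 1)" using pt_Sigma_eq W nz by (metis one_neq_zero)
      hence "vadd (sm k (Z 1)) (sm 1 (Z \<omega>)) = (\<lambda>_. 0)" by (simp add: vadd_def sm_def fun_eq_iff xx)
      thus False using I \<open>k \<in> Fq\<close> unfolding indep_def by (metis Fq_1 one_neq_zero)
    qed
    show "\<exists>P\<in>Sigma q. \<exists>R\<in>Sigma q. P \<noteq> R \<and> {pt (Z l) | l. l \<noteq> 0} = Sigma q \<inter> pgline P R"
      using P ne line_lemma[OF W W I] eq by blast
  next
    fix X Y assume "X \<in> {pt (Z l) | l. l \<noteq> 0}" "Y \<in> {pt (Z l) | l. l \<noteq> 0}"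
    then obtain l l' where "X = pt (Z l)" "Y = pt (Z l')" by blast
    thus "perp q \<omega> X Y" using hz perp_pt by simp
  qed
qed

lemma pt_Z_in_Q: "isW v \<Longrightarrow> v \<noteq> (\<lambda>_. 0) \<Longrightarrow> v 6 = 0 \<Longrightarrow> Qf v = 0 \<Longrightarrow> pt v \<in> Oset q \<omega> \<gamma>"
  using Oset_mem by blast

lemma pow2q': "(x::'a)^(q*2) = (x^q)^2" by (simp add: power_mult)

lemma fermat_n: "(x::'a)^(q*(q*n)) = x^n" by (simp add: mult.assoc[symmetric] power_mult fermat)

definition Zt :: "'a \<Rightarrow> 'a \<Rightarrow> nat \<Rightarrow> 'a" where
  "Zt t l = vec6 l (l^q) (l*t + l^q*t^q) (l^q*t^(2*q)) (l*t^2) 0"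

lemma S_line_Zt: "S_line q t = {pt (Zt t l) | l. l \<noteq> 0}" unfolding S_line_def Zt_def ..

lemma Zt_props:
  shows "\<And>s r. s \<in> Fq \<Longrightarrow> r \<in> Fq \<Longrightarrow> Zt t (s + r*\<omega>) = vadd (sm s (Zt t 1)) (sm r (Zt t \<omega>))"
    and "\<And>l. isW (Zt t l)" and "\<And>l. l \<noteq> 0 \<Longrightarrow> Zt t l \<noteq> (\<lambda>_. 0)"
    and "\<And>l l'. hform q \<omega> (Zt t l) (Zt t l') = 0"
    and "\<And>l. Qf (Zt t l) = 0" and "\<And>l. Zt t l 6 = 0"
proof -
  fix s r assume "s \<in> Fq" "r \<in> Fq"
  hence sr: "s^q = s" "r^q = r" by (simp_all add: Fq_iff)
  show "Zt t (s + r*\<omega>) = vadd (sm s (Zt t 1)) (sm r (Zt t \<omega>))"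
    unfolding Zt_def sm_vec6 vadd_vec6 using sr by (simp add: frobs algebra_simps)
next
  fix l
  have "(l^q*t^(2*q))^q = l*t^2" by (simp add: power_mult_distrib power_mult[symmetric] mult.commute)
       (simp add: power_mult mult.commute fermat)
  moreover have "l*t + l^q*t^q \<in> Fq" using tr_Fq[of "l*t"] by (simp add: tr_def power_mult_distrib)
  ultimately show "isW (Zt t l)" unfolding Zt_def isW_def using q_pos by (auto simp: vec6_out)
next
  fix l :: 'a assume "l \<noteq> 0" thus "Zt t l \<noteq> (\<lambda>_. 0)" unfolding Zt_def vec6_zero_iff by simp
next
  fix l l'
  show "hform q \<omega> (Zt t l) (Zt t l') = 0" unfolding Zt_def hform_def using q_pos
    by (simp add: frobs zero_power algebra_simps power_mult[symmetric] mult.commute fermat fermat_n c2s)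
next
  fix l
  show "Qf (Zt t l) = 0" unfolding Zt_def Qf_def by (simp add: pow2q' algebra_simps power2_eq_square c2s)
next
  fix l show "Zt t l 6 = 0" by (simp add: Zt_def)
qed

end

context gq begin

definition Zi :: "'a \<Rightarrow> nat \<Rightarrow> 'a" where "Zi l = vec6 0 0 0 (l^q) l 0"

lemma S_inf_Zi: "S_inf q = {pt (Zi l) | l. l \<noteq> 0}" unfolding S_inf_def Zi_def ..

lemma Zi_props:
  shows "\<And>s r. s \<in> Fq \<Longrightarrow> r \<in> Fq \<Longrightarrow> Zi (s + r*\<omega>) = vadd (sm s (Zi 1)) (sm r (Zi \<omega>))"
    and "\<And>l. isW (Zi l)" and "\<And>l. l \<noteq> 0 \<Longrightarrow> Zi l \<noteq> (\<lambda>_. 0)"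
    and "\<And>l l'. hform q \<omega> (Zi l) (Zi l') = 0"
    and "\<And>l. Qf (Zi l) = 0" and "\<And>l. Zi l 6 = 0"
proof -
  fix s r assume "s \<in> Fq" "r \<in> Fq"
  hence sr: "s^q = s" "r^q = r" by (simp_all add: Fq_iff)
  show "Zi (s + r*\<omega>) = vadd (sm s (Zi 1)) (sm r (Zi \<omega>))"
    unfolding Zi_def sm_vec6 vadd_vec6 using sr by (simp add: frobs)
next
  fix l show "isW (Zi l)" unfolding Zi_def isW_def using q_pos by (auto simp: vec6_out)
next
  fix l :: 'a assume "l \<noteq> 0" thus "Zi l \<noteq> (\<lambda>_. 0)" unfolding Zi_def vec6_zero_iff by simp
next
  fix l l' show "hform q \<omega> (Zi l) (Zi l') = 0" unfolding Zi_def hform_def using q_pos by (simp add: zero_power)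
next
  fix l show "Qf (Zi l) = 0" unfolding Zi_def Qf_def by simp
next
  fix l show "Zi l 6 = 0" by (simp add: Zi_def)
qed

lemma spread_W: assumes "L \<in> spread q" shows "W_line q \<omega> L \<and> L \<subseteq> Oset q \<omega> \<gamma>"
proof -
  consider (a) t where "L = S_line q t" | (b) "L = S_inf q" using assms unfolding spread_def by blast
  thus ?thesis
  proof cases
    case a
    have "W_line q \<omega> L" unfolding a S_line_Zt by (rule para_line(1)[OF Zt_props(1-4)]) auto
    moreover have "L \<subseteq> Oset q \<omega> \<gamma>" unfolding a S_line_Zt using Zt_props pt_Z_in_Q by blast
    ultimately show ?thesis by blast
  next
    case b
    have "W_line q \<omega> L" unfolding b S_inf_Zi by (rule para_line(1)[OF Zi_props(1-4)]) auto
    moreover have "L \<subseteq> Oset q \<omega> \<gamma>" unfolding b S_inf_Zi using Zi_props pt_Z_in_Q by blast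
    ultimately show ?thesis by blast
  qed
qed

lemma card_S_line: fixes t :: 'a shows "card (S_line q t) = q + 1"
proof -
  have "S_line q t = Lset (Zt t 1) (Zt t \<omega>)" unfolding S_line_Zt by (rule para_line(3)[OF Zt_props(1-4)]) auto
  thus ?thesis using card_Lset(1) Zt_props(2) para_line(2)[OF Zt_props(1-4)] by auto
qed

lemma card_S_inf: "card (S_inf q :: (nat \<Rightarrow> 'a) set set) = q + 1"
proof -
  have "S_inf q = Lset (Zi 1) (Zi \<omega>)" unfolding S_inf_Zi by (rule para_line(3)[OF Zi_props(1-4)]) auto
  thus ?thesis using card_Lset(1) Zi_props(2) para_line(2)[OF Zi_props(1-4)] by auto
qed

lemma card_spread: "card (spread q :: (nat \<Rightarrow> 'a) set set set) = q^2 + 1"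
proof -
  have inj: "inj (S_line q :: 'a \<Rightarrow> _)"
  proof (rule injI)
    fix t t' :: 'a assume eq: "S_line q t = S_line q t'"
    have "pt (Zt t 1) \<in> S_line q t" unfolding S_line_Zt by (intro CollectI exI[of _ 1]) simp
    hence "pt (Zt t 1) \<in> S_line q t'" using eq by simp
    then obtain l where l: "l \<noteq> 0" "pt (Zt t 1) = pt (Zt t' l)" unfolding S_line_Zt by blast
    obtain c where c: "c \<noteq> 0" "Zt t' l = sm c (Zt t 1)" using pt_eq_iff[OF Zt_props(3)] l(2) by (metis one_neq_zero)
    have "l = c" "l*t'^2 = c*t^2" using c(2) unfolding Zt_def sm_vec6 vec6_eq_iff by auto
    hence "t'^2 = t^2" using l(1) by simp
    thus "t = t'" by (simp add: sq_inj)
  qed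
  have ni: "(S_inf q :: (nat \<Rightarrow> 'a) set set) \<notin> range (S_line q :: 'a \<Rightarrow> _)"
  proof
    assume "(S_inf q :: (nat \<Rightarrow> 'a) set set) \<in> range (S_line q :: 'a \<Rightarrow> _)"
    then obtain t :: 'a where eq: "(S_inf q :: (nat \<Rightarrow> 'a) set set) = S_line q t" by blast
    have "pt (Zi 1) \<in> S_inf q" unfolding S_inf_Zi by (intro CollectI exI[of _ 1]) simp
    hence "pt (Zi 1) \<in> S_line q t" using eq by simp
    then obtain l where l: "l \<noteq> 0" "pt (Zi 1) = pt (Zt t l)" unfolding S_line_Zt by blast
    obtain c where c: "c \<noteq> 0" "Zt t l = sm c (Zi 1)" using pt_eq_iff[OF Zi_props(3)] l(2) by (metis one_neq_zero)
    have "l = 0" using c(2) unfolding Zt_def Zi_def sm_vec6 vec6_eq_iff by auto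
    thus False using l by simp
  qed
  have "card (range (S_line q :: 'a \<Rightarrow> _)) = q^2" using card_image[OF inj] cardF by simp
  thus ?thesis unfolding spread_def using ni by simp
qed

end

context gq begin

definition Bq :: "(nat \<Rightarrow> 'a) \<Rightarrow> (nat \<Rightarrow> 'a) \<Rightarrow> 'a" where
  "Bq v w = v 1 * w 5 + w 1 * v 5 + v 2 * w 4 + w 2 * v 4"
definition Rf :: "(nat \<Rightarrow> 'a) \<Rightarrow> (nat \<Rightarrow> 'a) \<Rightarrow> 'a" where
  "Rf z u = z 1 * u 5 + u 1 * z 5"

lemma Qf_line: "Qf (vadd v (sm t w)) = Qf v + t * Bq v w + t^2 * Qf w"
  unfolding Qf_def Bq_def vadd_def sm_def by (simp add: algebra_simps power2_eq_square c2s)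

lemma Rf_line: "Rf (vadd v (sm t w)) u = Rf v u + t * Rf w u"
  unfolding Rf_def vadd_def sm_def by (simp add: algebra_simps)

lemma Rf_self: "Rf u u = 0" unfolding Rf_def by (simp add: mult.commute xx)

lemma pt_in_Sline: assumes W: "isW z" and nz: "z \<noteq> (\<lambda>_. 0)" and z6: "z 6 = 0" and Q: "Qf z = 0"
  and rel: "z 5 = z 1 * \<tau>^2"
  shows "pt z \<in> S_line q \<tau>"
proof -
  obtain al d be f where z: "z = vec6 al (al^q) d be (be^q) f" "d \<in> Fq" "f \<in> Fq" using W isW_E by blast
  have f0: "f = 0" using z6 z by simp
  have b5: "be^q = al*\<tau>^2" using rel z by simp
  have "be = (al*\<tau>^2)^q" using b5 frob_frob[of be] by simp
  hence b4: "be = al^q*\<tau>^(2*q)" by (simp add: power_mult_distrib power_mult[symmetric])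
  have "d^2 + (al*be^q + al^q*be) = 0" using Q z unfolding Qf_def by (simp add: add.assoc mult.commute)
  hence "d^2 = al*be^q + al^q*be" by (metis eq_iff_sum0)
  also have "\<dots> = al*(al*\<tau>^2) + al^q*(al^q*\<tau>^(2*q))" using b5 b4 by simp
  also have "\<dots> = (al*\<tau> + al^q*\<tau>^q)^2" by (simp add: algebra_simps power2_eq_square c2s pow2q')
  finally have d: "d = al*\<tau> + al^q*\<tau>^q" by (simp add: sq_inj)
  have a0: "al \<noteq> 0"
  proof
    assume "al = 0"
    hence "be = 0" "d = 0" using b4 d q_pos by auto
    thus False using nz z f0 \<open>al = 0\<close> q_pos by (simp add: vec6_zero_iff)
  qed
  have "z = Zt \<tau> al" unfolding Zt_def z(1) f0 b4 d using b5 b4 by simp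
  thus ?thesis unfolding S_line_Zt using a0 by blast
qed

lemma pt_in_Sinf: assumes W: "isW z" and nz: "z \<noteq> (\<lambda>_. 0)" and z6: "z 6 = 0" and Q: "Qf z = 0"
  and z1: "z 1 = 0"
  shows "pt z \<in> S_inf q"
proof -
  obtain al d be f where z: "z = vec6 al (al^q) d be (be^q) f" "d \<in> Fq" "f \<in> Fq" using W isW_E by blast
  have f0: "f = 0" "al = 0" using z6 z1 z by auto
  have "d^2 = 0" using Q z f0 q_pos unfolding Qf_def by (simp add: zero_power)
  hence d0: "d = 0" by simp
  have "be \<noteq> 0" using nz z f0 d0 q_pos by (auto simp: vec6_zero_iff)
  moreover have "z = Zi (be^q)" unfolding Zi_def z(1) f0 d0 using q_pos by (simp add: zero_power)
  ultimately show ?thesis unfolding S_inf_Zi using q_pos by auto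
qed

end

context gq begin

lemma Rf_comm: "Rf z u = Rf u z" unfolding Rf_def by (simp add: algebra_simps)

lemma spread_a: assumes Wv: "isW v" and Ww: "isW w" and I: "indep v w" and v6: "v 6 = 0" and w6: "w 6 = 0"
  and Qv: "Qf v = 0" and Qw: "Qf w = 0" and B: "Bq v w = 0" and H: "hform q \<omega> v w = 0"
  shows "Lset v w \<in> spread q"
proof -
  obtain al d be f where v: "v = vec6 al (al^q) d be (be^q) f" "d \<in> Fq" "f \<in> Fq" using Wv isW_E by blast
  obtain a e b g where w: "w = vec6 a (a^q) e b (b^q) g" "e \<in> Fq" "g \<in> Fq" using Ww isW_E by blast
  have fg: "f = 0" "g = 0" using v6 w6 v w by auto
  define X where "X = Rf v w"
  have X: "X = al*b^q + a*be^q" unfolding X_def Rf_def v(1) w(1) by simp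
  have "Bq v w = tr X" unfolding Bq_def X v(1) w(1) tr_def by (simp add: frobs algebra_simps)
  hence "X \<in> Fq" using B by (simp add: tr_zero_iff)
  moreover have "hform q \<omega> v w = tr (\<omega>*X)" unfolding hform_def X v(1) w(1) fg tr_def using q_pos
    by (simp add: frobs algebra_simps zero_power)
  ultimately have "X = 0" using H tr_mult_Fq[of X \<omega>] tr_om by (simp add: mult.commute)
  hence R: "Rf v w = 0" unfolding X_def .
  let ?Zs = "{vadd v (sm t w) | t. t \<in> Fq} \<union> {w}"
  have LZ: "Lset v w = {pt z | z. z \<in> ?Zs}" unfolding Lset_def by blast
  have props: "\<And>z. z \<in> ?Zs \<Longrightarrow> isW z \<and> z \<noteq> (\<lambda>_. 0) \<and> z 6 = 0 \<and> Qf z = 0 \<and> Rf z v = 0 \<and> Rf z w = 0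
      \<and> (v 1 = 0 \<and> w 1 = 0 \<longrightarrow> z 1 = 0)"
  proof -
    fix z assume "z \<in> ?Zs"
    then consider (a) t where "t \<in> Fq" "z = vadd v (sm t w)" | (b) "z = w" by blast
    thus "isW z \<and> z \<noteq> (\<lambda>_. 0) \<and> z 6 = 0 \<and> Qf z = 0 \<and> Rf z v = 0 \<and> Rf z w = 0 \<and> (v 1 = 0 \<and> w 1 = 0 \<longrightarrow> z 1 = 0)"
    proof cases
      case a
      have "isW z" using isW_lin[OF Wv Ww Fq_1 a(1)] a(2) by simp
      moreover have "z \<noteq> (\<lambda>_. 0)" using I a unfolding indep_def by (metis Fq_1 sm_1 zero_neq_one)
      moreover have "z 6 = 0" using a(2) v6 w6 by (simp add: vadd_def sm_def)
      moreover have "Qf z = 0" using a(2) Qf_line Qv Qw B by simp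
      moreover have "Rf z v = 0" using a(2) Rf_line Rf_self Rf_comm R by (metis add_0 mult_zero_right)
      moreover have "Rf z w = 0" using a(2) Rf_line Rf_self R by (metis add_0 mult_zero_right)
      moreover have "v 1 = 0 \<and> w 1 = 0 \<longrightarrow> z 1 = 0" using a(2) by (simp add: vadd_def sm_def)
      ultimately show ?thesis by blast
    next
      case b
      thus ?thesis using Ww indep_nz[OF I] w6 Qw R Rf_comm Rf_self by metis
    qed
  qed
  have fin: "\<And>A :: (nat \<Rightarrow> 'a) set set. card A = q + 1 \<Longrightarrow> finite A" by (rule card_ge_0_finite) simp
  have cL: "card (Lset v w) = q + 1" using card_Lset(1)[OF Wv Ww I] .
  show ?thesis
  proof (cases "v 1 = 0 \<and> w 1 = 0")
    case True
    have "Lset v w \<subseteq> S_inf q" unfolding LZ using props pt_in_Sinf True by blast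
    hence "Lset v w = S_inf q" using card_subset_eq[OF fin[OF card_S_inf]] cL card_S_inf by simp
    thus ?thesis unfolding spread_def by simp
  next
    case False
    define u where "u = (if v 1 \<noteq> 0 then v else w)"
    have u1: "u 1 \<noteq> 0" using False u_def by auto
    have Ru: "\<And>z. z \<in> ?Zs \<Longrightarrow> Rf z u = 0" using props u_def by auto
    obtain \<tau> where tau: "\<tau>^2 = u 5 / u 1" using sqrt_ex by blast
    have rel: "\<And>z. z \<in> ?Zs \<Longrightarrow> z 5 = z 1 * \<tau>^2"
    proof -
      fix z assume "z \<in> ?Zs"
      hence "z 1 * u 5 + u 1 * z 5 = 0" using Ru unfolding Rf_def by blast
      hence "u 1 * z 5 = z 1 * u 5" by (metis eq_iff_sum0 add.commute)
      moreover have "u 5 = u 1 * \<tau>^2" using u1 tau by simp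
      ultimately have "u 1 * z 5 = u 1 * (z 1 * \<tau>^2)" by (simp add: algebra_simps)
      thus "z 5 = z 1 * \<tau>^2" using u1 by simp
    qed
    have "Lset v w \<subseteq> S_line q \<tau>" unfolding LZ using props pt_in_Sline rel by blast
    hence "Lset v w = S_line q \<tau>" using card_subset_eq[OF fin[OF card_S_line]] cL card_S_line by simp
    thus ?thesis unfolding spread_def by simp
  qed
qed

end

context gq begin

lemma line_main: assumes WL: "W_line q \<omega> L"
  shows "card (L \<inter> Oset q \<omega> \<gamma>) \<in> {0,1,2,q+1}" and "L \<subseteq> Oset q \<omega> \<gamma> \<Longrightarrow> L \<in> spread q"
proof -
  let ?Os = "Oset q \<omega> \<gamma>"
  obtain v w where Wv: "isW v" and Ww: "isW w" and I: "indep v w" and L: "L = Lset v w"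
    and w6: "w 6 = 0" and v6: "v 6 = 0 \<or> v 6 = 1" and H: "hform q \<omega> v w = 0"
    using Wline_norm[OF WL] by blast
  have cnt: "card (L \<inter> ?Os) = (if pt w \<in> ?Os then 1 else 0) + card {t\<in>Fq. pt (vadd v (sm t w)) \<in> ?Os}"
    unfolding L by (rule card_Lset_Int[OF Wv Ww I])
  have wnz: "w \<noteq> (\<lambda>_. 0)" using indep_nz[OF I] by simp
  have uW: "\<And>t. t \<in> Fq \<Longrightarrow> isW (vadd v (sm t w))" using isW_lin[OF Wv Ww Fq_1] by simp
  have unz: "\<And>t. t \<in> Fq \<Longrightarrow> vadd v (sm t w) \<noteq> (\<lambda>_. 0)" using I unfolding indep_def by (metis Fq_1 sm_1 zero_neq_one)
  have ptw: "pt w \<in> ?Os \<longleftrightarrow> Qf w = 0" using Oset_mem[OF Ww wnz] w6 by simp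
  have cardL: "card L = q + 1" unfolding L using card_Lset(1)[OF Wv Ww I] .
  have "\<exists>a b c. (pt w \<in> ?Os \<longleftrightarrow> c = 0) \<and> (\<forall>t\<in>Fq. pt (vadd v (sm t w)) \<in> ?Os \<longleftrightarrow> c*t^2 + b*t + a = 0)
       \<and> (c = 0 \<and> b = 0 \<and> a = 0 \<longrightarrow> L \<in> spread q)"
  proof (cases "v 6 = 0")
    case True
    have P: "\<forall>t\<in>Fq. pt (vadd v (sm t w)) \<in> ?Os \<longleftrightarrow> Qf w*t^2 + Bq v w*t + Qf v = 0"
    proof
      fix t :: 'a assume t: "t \<in> Fq"
      have "(vadd v (sm t w)) 6 = 0" using True w6 by (simp add: vadd_def sm_def)
      hence "pt (vadd v (sm t w)) \<in> ?Os \<longleftrightarrow> Qf (vadd v (sm t w)) = 0" using Oset_mem[OF uW[OF t] unz[OF t]] by simp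
      thus "pt (vadd v (sm t w)) \<in> ?Os \<longleftrightarrow> Qf w*t^2 + Bq v w*t + Qf v = 0" unfolding Qf_line by (simp add: algebra_simps)
    qed
    have "Qf w = 0 \<and> Bq v w = 0 \<and> Qf v = 0 \<longrightarrow> L \<in> spread q"
      using spread_a[OF Wv Ww I True w6 _ _ _ H] L by blast
    thus ?thesis using P ptw by blast
  next
    case False
    hence v1: "v 6 = 1" using v6 by simp
    obtain al d be f where v: "v = vec6 al (al^q) d be (be^q) f" "d \<in> Fq" "f \<in> Fq" using Wv isW_E by blast
    obtain a e b g where w: "w = vec6 a (a^q) e b (b^q) g" "e \<in> Fq" "g \<in> Fq" using Ww isW_E by blast
    have fg: "f = 1" "g = 0" using v1 w6 v w by auto
    have H': "hform q \<omega> (vec6 al (al^q) d be (be^q) 1) (vec6 a (a^q) e b (b^q) 0) = 0" using H v w fg by simp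
    obtain \<rho> \<kappa> where cb1: "\<And>t. t \<in> Fq \<Longrightarrow> Th (al+t*a) (d+t*e) (be+t*b) = 0 \<longleftrightarrow>
        (NN * Qf (vec6 a (a^q) e b (b^q) 0))*t^2 + \<rho>*t + \<kappa> = 0"
      and cb2: "\<kappa> = 0 \<longleftrightarrow> Th al d be = 0"
      and cb3: "\<rho>^2 = (tr (\<omega>^q*c1 al be a b e/\<omega>))^2 + tr (c2 a b e/\<omega>)"
      using caseb[OF w(2) H'] by blast
    have Qw: "Qf w = Qf (vec6 a (a^q) e b (b^q) 0)" using w fg by simp
    have P: "\<forall>t\<in>Fq. pt (vadd v (sm t w)) \<in> ?Os \<longleftrightarrow> (NN * Qf w)*t^2 + \<rho>*t + \<kappa> = 0"
    proof
      fix t :: 'a assume t: "t \<in> Fq"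
      have u: "(vadd v (sm t w)) 1 = al + t*a" "(vadd v (sm t w)) 3 = d + t*e" "(vadd v (sm t w)) 4 = be + t*b"
        "(vadd v (sm t w)) 6 = 1" using v w fg by (simp_all add: vadd_def sm_def)
      have "pt (vadd v (sm t w)) \<in> ?Os \<longleftrightarrow> Th (al+t*a) (d+t*e) (be+t*b) = 0"
        using Oset_mem[OF uW[OF t] unz[OF t]] unfolding u by simp
      thus "pt (vadd v (sm t w)) \<in> ?Os \<longleftrightarrow> (NN * Qf w)*t^2 + \<rho>*t + \<kappa> = 0" using cb1[OF t] Qw by simp
    qed
    have P0: "pt w \<in> ?Os \<longleftrightarrow> NN * Qf w = 0" using ptw NN_nz by simp
    have "NN * Qf w = 0 \<and> \<rho> = 0 \<and> \<kappa> = 0 \<longrightarrow> L \<in> spread q"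
    proof
      assume h: "NN * Qf w = 0 \<and> \<rho> = 0 \<and> \<kappa> = 0"
      have "Qf (vec6 a (a^q) e b (b^q) 0) = 0" using h NN_nz Qw by simp
      moreover have "(tr (\<omega>^q*c1 al be a b e/\<omega>))^2 + tr (c2 a b e/\<omega>) = 0" using h cb3 by simp
      moreover have "Th al d be = 0" using h cb2 by simp
      moreover have "a \<noteq> 0 \<or> e \<noteq> 0 \<or> b \<noteq> 0" using wnz w fg q_pos by (auto simp: vec6_zero_iff)
      ultimately show "L \<in> spread q" using excl[OF w(2) H'] by blast
    qed
    thus ?thesis using P P0 by blast
  qed
  then obtain a b c where P0: "pt w \<in> ?Os \<longleftrightarrow> c = 0" and P: "\<forall>t\<in>Fq. pt (vadd v (sm t w)) \<in> ?Os \<longleftrightarrow> c*t^2 + b*t + a = 0"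
    and sp: "c = 0 \<and> b = 0 \<and> a = 0 \<longrightarrow> L \<in> spread q" by blast
  have Pt: "\<And>t. t \<in> Fq \<Longrightarrow> (pt (vadd v (sm t w)) \<in> ?Os) \<longleftrightarrow> c*t^2 + b*t + a = 0" using P by blast
  show "card (L \<inter> ?Os) \<in> {0,1,2,q+1}" unfolding cnt by (rule count_quad(1)[OF P0 Pt])
  assume sub: "L \<subseteq> ?Os"
  hence "card (L \<inter> ?Os) = q + 1" using cardL by (simp add: Int_absorb2)
  hence "c = 0 \<and> b = 0 \<and> a = 0" unfolding cnt using count_quad(2)[OF P0 Pt] by blast
  thus "L \<in> spread q" using sp by blast
qed

theorem main_loc:
  shows "(\<forall>L. W_line q \<omega> L \<longrightarrow> card (L \<inter> Oset q \<omega> \<gamma>) \<in> {0, 1, 2, q + 1})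
       \<and> {L. W_line q \<omega> L \<and> L \<subseteq> Oset q \<omega> \<gamma>} = spread q
       \<and> card {L. W_line q \<omega> L \<and> L \<subseteq> Oset q \<omega> \<gamma>} = q ^ 2 + 1"
proof -
  have eq: "{L. W_line q \<omega> L \<and> L \<subseteq> Oset q \<omega> \<gamma>} = spread q"
    using line_main(2) spread_W by blast
  thus ?thesis using line_main(1) card_spread by simp
qed

end

theorem mainTheorem19:
  fixes q :: nat and \<omega> \<gamma> :: "'a::{field,finite}"
  assumes "\<exists>p e. prime p \<and> e \<ge> 1 \<and> q = p ^ e" and "even q"
    and "card (UNIV :: 'a set) = q ^ 2"
    and "\<omega> \<notin> subF q" and "\<omega> + \<omega> ^ q = 1"
    and "irreducible [:\<gamma>, 1, 1:]"
  shows "(\<forall>L. W_line q \<omega> L \<longrightarrow> card (L \<inter> Oset q \<omega> \<gamma>) \<in> {0, 1, 2, q + 1})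
       \<and> {L. W_line q \<omega> L \<and> L \<subseteq> Oset q \<omega> \<gamma>} = spread q
       \<and> card {L. W_line q \<omega> L \<and> L \<subseteq> Oset q \<omega> \<gamma>} = q ^ 2 + 1"
proof -
  obtain p e where pe: "prime p" "e \<ge> 1" "q = p^e" using assms(1) by blast
  have "(2::nat) dvd p^e" using assms(2) pe(3) by simp
  hence "(2::nat) dvd p" using prime_dvd_power_nat[OF two_is_prime_nat] by blast
  hence p2: "p = 2" using primes_dvd_imp_eq[OF two_is_prime_nat pe(1)] by simp
  interpret gq q e \<omega> \<gamma>
  proof
    show "q = 2^e" using pe p2 by simp
    show "1 \<le> e" using pe by simp
    show "card (UNIV::'a set) = q^2" using assms(3) .
    show "\<omega>^q \<noteq> \<omega>" using assms(4) by (simp add: subF_def)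
    show "\<omega> + \<omega>^q = 1" using assms(5) .
    show "\<And>t. t^2 + t + \<gamma> \<noteq> 0" using irr_noroot[OF assms(6)] .
  qed
  show ?thesis by (rule main_loc)
qed

end
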